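(* For all $\mu_1,\mu_2\in M_+(\mathbb T)$, $\mathcal D(\mu_1,\mu_2)\subseteq H^2(\mathbb D^2)$.
   Context: $\mathbb D$ is the open unit disc, $\mathbb T$ the unit circle, $\mathcal O(\mathbb D^2)$ the holomorphic functions on $\mathbb D^2$, $M_+(\mathbb T)$ the finite positive Borel measures on $\mathbb T$. Integrals $\int_{\mathbb T}\cdots d\theta$ are over $\theta\in[0,2\pi]$ with respect to $d\theta/2\pi$; $dA$ is normalized area measure on $\mathbb D$; for $\mu\in M_+(\mathbb T)$, $P_\mu(w)=\int_{\mathbb T}\frac{1-|w|^2}{|w-\zeta|^2}d\mu(\zeta)$. $H^2(\mathbb D^2)$ is the space of $f=\sum_{m,n\ge0}a_{m,n}z_1^mz_2^n\in\mathcal O(\mathbb D^2)$ with $\sum|a_{m,n}|^2<\infty$. For $f\in\mathcal O(\mathbb D^2)$, $D_{\mu_1,\mu_2}(f)=\sup_{0<r<1}\int_{\mathbb T}\int_{\mathbb D}|\partial_1f(z_1,re^{i\theta})|^2P_{\mu_1}(z_1)dA(z_1)d\theta+\sup_{0<r<1}\int_{\mathbb T}\int_{\mathbb D}|\partial_2f(re^{i\theta},z_2)|^2P_{\mu_2}(z_2)dA(z_2)d\theta$. If $\mu_1=0$ or $\mu_2=0$, $\mathcal D(\mu_1,\mu_2)=\{f\in H^2(\mathbb D^2):D_{\mu_1,\mu_2}(f)<\infty\}$; otherwise $\mathcal D(\mu_1,\mu_2)=\{f\in\mathcal O(\mathbb D^2):D_{\mu_1,\mu_2}(f)<\infty\}$.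 *)

theory Defs
  imports "HOL-Analysis.Analysis"
begin

abbreviation unit_disc :: "complex set" where "unit_disc \<equiv> ball 0 1"
abbreviation unit_circle :: "complex set" where "unit_circle \<equiv> sphere 0 1"

text \<open>Holomorphic functions on the bidisc: continuous and holomorphic in each
  variable separately (Osgood's definition; equivalent to joint holomorphy).\<close>
definition holo_bidisc :: "(complex \<times> complex \<Rightarrow> complex) \<Rightarrow> bool" where
  "holo_bidisc f \<longleftrightarrow>
     continuous_on (unit_disc \<times> unit_disc) f \<and>
     (\<forall>z2\<in>unit_disc. (\<lambda>z1. f (z1, z2)) holomorphic_on unit_disc) \<and>
     (\<forall>z1\<in>unit_disc. (\<lambda>z2. f (z1, z2)) holomorphic_on unit_disc)"

definition H2_bidisc :: "(complex \<times> complex \<Rightarrow> complex) set" where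
  "H2_bidisc = {f. holo_bidisc f \<and>
     (\<exists>a :: nat \<times> nat \<Rightarrow> complex.
        (\<lambda>(m,n). (norm (a (m,n)))\<^sup>2) summable_on UNIV \<and>
        (\<forall>z1\<in>unit_disc. \<forall>z2\<in>unit_disc.
           ((\<lambda>(m,n). a (m,n) * z1 ^ m * z2 ^ n) has_sum f (z1, z2)) UNIV))}"

definition circle_measure :: "complex measure \<Rightarrow> bool" where
  "circle_measure \<mu> \<longleftrightarrow> sets \<mu> = sets (restrict_space borel unit_circle) \<and> finite_measure \<mu>"

definition zero_measure :: "complex measure \<Rightarrow> bool" where
  "zero_measure \<mu> \<longleftrightarrow> emeasure \<mu> (space \<mu>) = 0"

definition poisson :: "complex measure \<Rightarrow> complex \<Rightarrow> real" where
  "poisson \<mu> w = (\<integral>\<zeta>. (1 - (cmod w)\<^sup>2) / (cmod (w - \<zeta>))\<^sup>2 \<partial>\<mu>)"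

definition pd1 :: "(complex \<times> complex \<Rightarrow> complex) \<Rightarrow> complex \<times> complex \<Rightarrow> complex" where
  "pd1 f z = deriv (\<lambda>w. f (w, snd z)) (fst z)"
definition pd2 :: "(complex \<times> complex \<Rightarrow> complex) \<Rightarrow> complex \<times> complex \<Rightarrow> complex" where
  "pd2 f z = deriv (\<lambda>w. f (fst z, w)) (snd z)"

definition area_int :: "(complex \<Rightarrow> real) \<Rightarrow> ennreal" where
  "area_int g = (\<integral>\<^sup>+ z. ennreal (indicator unit_disc z * g z / pi) \<partial>lborel)"
definition circ_int :: "(real \<Rightarrow> ennreal) \<Rightarrow> ennreal" where
  "circ_int h = (\<integral>\<^sup>+ \<theta>. ennreal (indicator {0..2*pi} \<theta> / (2*pi)) * h \<theta> \<partial>lborel)"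

definition dirichlet_integral ::
  "complex measure \<Rightarrow> complex measure \<Rightarrow> (complex \<times> complex \<Rightarrow> complex) \<Rightarrow> ennreal" where
  "dirichlet_integral \<mu>1 \<mu>2 f =
     (SUP r\<in>{0<..<1::real}. circ_int (\<lambda>\<theta>. area_int (\<lambda>z1.
        (cmod (pd1 f (z1, r * cis \<theta>)))\<^sup>2 * poisson \<mu>1 z1)))
   + (SUP r\<in>{0<..<1::real}. circ_int (\<lambda>\<theta>. area_int (\<lambda>z2.
        (cmod (pd2 f (r * cis \<theta>, z2)))\<^sup>2 * poisson \<mu>2 z2)))"

definition dirichlet_space ::
  "complex measure \<Rightarrow> complex measure \<Rightarrow> (complex \<times> complex \<Rightarrow> complex) set" where
  "dirichlet_space \<mu>1 \<mu>2 =
     (if zero_measure \<mu>1 \<or> zero_measure \<mu>2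
      then {f \<in> H2_bidisc. dirichlet_integral \<mu>1 \<mu>2 f < \<infinity>}
      else {f. holo_bidisc f \<and> dirichlet_integral \<mu>1 \<mu>2 f < \<infinity>})"

end

theory Submission
  imports Defs "HOL-Complex_Analysis.Complex_Analysis"
begin


lemma CI_param_cont:
  assumes cont: "continuous_on (U \<times> path_image g) (\<lambda>(x,z). F x z)"
    and vp: "valid_path g"
    and vd: "continuous_on {0..1} (\<lambda>t. vector_derivative g (at t))"
  shows "continuous_on U (\<lambda>x. contour_integral g (F x))"
proof -
  have gc: "continuous_on {0..1} g"
    using vp valid_path_imp_path path_def by blast
  have "continuous_on (U \<times> cbox 0 1) (\<lambda>(x,t). F x (g t) * vector_derivative g (at t))"
    unfolding case_prod_beta
  proof (rule continuous_on_mult)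
    have "continuous_on (U \<times> {0..1}) ((\<lambda>(x,z). F x z) \<circ> (\<lambda>(x,t). (x, g t)))"
    proof (rule continuous_on_compose)
      show "continuous_on (U \<times> {0..1}) (\<lambda>(x, t). (x, g t))"
        by (auto intro!: continuous_intros continuous_on_compose2[OF gc] simp: case_prod_beta)
      show "continuous_on ((\<lambda>(x, t). (x, g t)) ` (U \<times> {0..1})) (\<lambda>(x, z). F x z)"
        by (rule continuous_on_subset[OF cont]) (auto simp: path_image_def)
    qed
    then show "continuous_on (U \<times> cbox 0 1) (\<lambda>x. F (fst x) (g (snd x)))"
      by (simp add: o_def case_prod_beta)
    show "continuous_on (U \<times> cbox 0 1) (\<lambda>x. vector_derivative g (at (snd x)))"
      by (auto simp: case_prod_beta intro!: continuous_on_compose2[OF vd] continuous_intros)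
  qed
  then have "continuous_on U (\<lambda>x. integral (cbox 0 1) (\<lambda>t. F x (g t) * vector_derivative g (at t)))"
    by (rule integral_continuous_on_param)
  then show ?thesis
    by (simp add: contour_integral_integral)
qed

definition cf1 :: "(complex \<times> complex \<Rightarrow> complex) \<Rightarrow> nat \<Rightarrow> complex \<Rightarrow> complex" where
  "cf1 f m z2 = (deriv ^^ m) (\<lambda>z1. f (z1, z2)) 0 / fact m"

definition cfa :: "(complex \<times> complex \<Rightarrow> complex) \<Rightarrow> nat \<Rightarrow> nat \<Rightarrow> complex" where
  "cfa f m n = (deriv ^^ n) (cf1 f m) 0 / fact n"

lemma holo_slice1: "holo_bidisc f \<Longrightarrow> z2 \<in> unit_disc \<Longrightarrow> (\<lambda>z1. f (z1, z2)) holomorphic_on unit_disc"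
  by (simp add: holo_bidisc_def)
lemma holo_slice2: "holo_bidisc f \<Longrightarrow> z1 \<in> unit_disc \<Longrightarrow> (\<lambda>z2. f (z1, z2)) holomorphic_on unit_disc"
  by (simp add: holo_bidisc_def)
lemma holo_cont: "holo_bidisc f \<Longrightarrow> continuous_on (unit_disc \<times> unit_disc) f"
  by (simp add: holo_bidisc_def)

lemma cf1_integral:
  assumes hf: "holo_bidisc f" and z2: "z2 \<in> unit_disc"
  shows "cf1 f m z2 = contour_integral (circlepath 0 (1/2)) (\<lambda>w. f (w, z2) / w ^ Suc m) / (2 * pi * \<i>)"
proof -
  have h: "(\<lambda>z1. f (z1, z2)) holomorphic_on unit_disc" using holo_slice1[OF hf z2] .
  have "((\<lambda>u. f (u, z2) / (u - 0) ^ Suc m) has_contour_integral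
      complex_of_real (2 * pi) * \<i> / fact m * (deriv ^^ m) (\<lambda>z1. f (z1, z2)) 0) (circlepath 0 (1/2))"
  proof (rule Cauchy_has_contour_integral_higher_derivative_circlepath)
    show "continuous_on (cball 0 (1/2)) (\<lambda>z1. f (z1, z2))"
      by (rule holomorphic_on_imp_continuous_on, rule holomorphic_on_subset[OF h]) auto
    show "(\<lambda>z1. f (z1, z2)) holomorphic_on ball 0 (1/2)"
      by (rule holomorphic_on_subset[OF h]) auto
  qed auto
  then have "contour_integral (circlepath 0 (1/2)) (\<lambda>w. f (w, z2) / w ^ Suc m)
      = complex_of_real (2 * pi) * \<i> / fact m * (deriv ^^ m) (\<lambda>z1. f (z1, z2)) 0"
    by (simp add: contour_integral_unique)
  then show ?thesis by (simp add: cf1_def field_simps)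
qed

lemma cf1_holo:
  assumes hf: "holo_bidisc f"
  shows "cf1 f m holomorphic_on unit_disc"
proof -
  define F where "F = (\<lambda>z w. f (w, z) / w ^ Suc m)"
  define K where "K = 1 / (2 * pi * \<i>)"
  define \<gamma> where "\<gamma> = circlepath (0::complex) (1/2)"
  define h where "h = (\<lambda>z. K * contour_integral \<gamma> (F z))"
  have eq: "cf1 f m z = h z" if "z \<in> unit_disc" for z
    using cf1_integral[OF hf that, of m] by (simp add: h_def K_def F_def \<gamma>_def)
  have pig: "path_image \<gamma> = sphere 0 (1/2)" by (simp add: \<gamma>_def path_image_circlepath)
  have vpg: "valid_path \<gamma>" by (simp add: \<gamma>_def)
  have vdg: "continuous_on {0..1} (\<lambda>t. vector_derivative \<gamma> (at t))"
    by (simp add: \<gamma>_def vector_derivative_circlepath) (intro continuous_intros)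
  have contF: "continuous_on (unit_disc \<times> sphere 0 (1/2)) (\<lambda>(z, w). F z w)"
  proof -
    have fc: "continuous_on (unit_disc \<times> unit_disc) f" using holo_cont[OF hf] .
    have "continuous_on (unit_disc \<times> sphere 0 (1/2)) (\<lambda>x. f (snd x, fst x) / snd x ^ Suc m)"
    proof (intro continuous_intros)
      show "continuous_on (unit_disc \<times> sphere 0 (1/2)) (\<lambda>x. f (snd x, fst x))"
        by (rule continuous_on_compose2[OF fc]) (auto intro!: continuous_intros)
    qed auto
    then show ?thesis by (simp add: F_def case_prod_beta)
  qed
  have conth: "continuous_on unit_disc h"
    unfolding h_def
    by (intro continuous_intros CI_param_cont[OF _ vpg vdg]) (simp add: pig contF)
  have "h analytic_on unit_disc"
  proof (rule Morera_triangle[OF conth open_ball], intro allI impI)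
    fix a b c assume abc: "convex hull {a, b, c} \<subseteq> unit_disc"
    have segs: "closed_segment a b \<subseteq> unit_disc" "closed_segment b c \<subseteq> unit_disc" "closed_segment c a \<subseteq> unit_disc"
      using abc segments_subset_convex_hull by fastforce+
    have edge: "contour_integral (linepath x y) h = K * contour_integral \<gamma> (\<lambda>w. contour_integral (linepath x y) (\<lambda>z. F z w))"
      and edgei: "(\<lambda>w. contour_integral (linepath x y) (\<lambda>z. F z w)) contour_integrable_on \<gamma>"
      if xy: "closed_segment x y \<subseteq> unit_disc" for x y
    proof -
      have ci1: "(\<lambda>z. contour_integral \<gamma> (F z)) contour_integrable_on linepath x y"
        apply (rule contour_integrable_continuous_linepath)
        apply (rule continuous_on_subset[OF CI_param_cont[OF _ vpg vdg]])
         apply (rule continuous_on_subset[OF contF]) using xy by (auto simp: pig)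
      have "contour_integral (linepath x y) h = K * contour_integral (linepath x y) (\<lambda>z. contour_integral \<gamma> (F z))"
        unfolding h_def by (rule contour_integral_lmul[OF ci1])
      also have "contour_integral (linepath x y) (\<lambda>z. contour_integral \<gamma> (F z))
          = contour_integral \<gamma> (\<lambda>w. contour_integral (linepath x y) (\<lambda>z. F z w))"
      proof (rule contour_integral_swap)
        show "continuous_on (path_image (linepath x y) \<times> path_image \<gamma>) (\<lambda>(y1, y2). F y1 y2)"
          by (rule continuous_on_subset[OF contF]) (use xy in \<open>auto simp: pig\<close>)
        show "continuous_on {0..1} (\<lambda>t. vector_derivative (linepath x y) (at t))"
          by (simp add: vector_derivative_linepath_at)
      qed (auto simp: vpg vdg)
      finally show "contour_integral (linepath x y) h = K * contour_integral \<gamma> (\<lambda>w. contour_integral (linepath x y) (\<lambda>z. F z w))" .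
      show "(\<lambda>w. contour_integral (linepath x y) (\<lambda>z. F z w)) contour_integrable_on \<gamma>"
        unfolding \<gamma>_def
        apply (rule contour_integrable_continuous_circlepath)
        apply (rule CI_param_cont[where F="\<lambda>w z. F z w"])
        apply (rule continuous_on_subset[OF continuous_on_swap_args[OF contF]])
        using xy by (auto simp: pig[unfolded \<gamma>_def] vector_derivative_linepath_at)
    qed
    have zero: "contour_integral (linepath a b) (\<lambda>z. F z w) + contour_integral (linepath b c) (\<lambda>z. F z w)
        + contour_integral (linepath c a) (\<lambda>z. F z w) = 0" if w: "w \<in> path_image \<gamma>" for w
    proof -
      have wD: "w \<in> unit_disc" using w by (simp add: pig)
      have hol: "(\<lambda>z. F z w) holomorphic_on unit_disc"
        unfolding F_def using w by (intro holomorphic_intros holo_slice2[OF hf wD]) (auto simp: pig)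
      have ci: "(\<lambda>z. F z w) contour_integrable_on linepath x y" if "closed_segment x y \<subseteq> unit_disc" for x y
        by (rule contour_integrable_continuous_linepath,
            rule continuous_on_subset[OF holomorphic_on_imp_continuous_on[OF hol] that])
      have "contour_integral (linepath a b +++ linepath b c +++ linepath c a) (\<lambda>z. F z w) = 0"
        by (rule contour_integral_unique[OF Cauchy_theorem_triangle])
           (rule holomorphic_on_subset[OF hol abc])
      then show ?thesis
        using ci[OF segs(1)] ci[OF segs(2)] ci[OF segs(3)]
        by (simp add: contour_integrable_joinI add.assoc)
    qed
    have "contour_integral (linepath a b) h + contour_integral (linepath b c) h + contour_integral (linepath c a) h
       = K * (contour_integral \<gamma> (\<lambda>w. contour_integral (linepath a b) (\<lambda>z. F z w) + contour_integral (linepath b c) (\<lambda>z. F z w)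
        + contour_integral (linepath c a) (\<lambda>z. F z w)))"
      using edge[OF segs(1)] edge[OF segs(2)] edge[OF segs(3)] edgei[OF segs(1)] edgei[OF segs(2)] edgei[OF segs(3)]
      by (simp add: contour_integral_add contour_integrable_add distrib_left)
    also have "\<dots> = 0"
      by (simp add: contour_integral_eq_0 zero)
    finally show "contour_integral (linepath a b) h + contour_integral (linepath b c) h + contour_integral (linepath c a) h = 0" .
  qed
  then have "h holomorphic_on unit_disc" by (rule analytic_imp_holomorphic)
  then show ?thesis
    by (rule holomorphic_transform) (simp add: eq)
qed

lemma f_bound:
  assumes hf: "holo_bidisc f" and r: "0 < r" "r < 1"
  obtains M where "M > 0" "\<And>z1 z2. norm z1 \<le> r \<Longrightarrow> norm z2 \<le> r \<Longrightarrow> norm (f (z1, z2)) \<le> M"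
proof -
  have "compact (f ` (cball 0 r \<times> cball 0 r))"
    by (rule compact_continuous_image, rule continuous_on_subset[OF holo_cont[OF hf]])
       (use r in \<open>auto simp: compact_Times\<close>)
  then obtain M where "M > 0" "\<forall>x\<in>f ` (cball 0 r \<times> cball 0 r). norm x \<le> M"
    using compact_imp_bounded bounded_pos by metis
  then show ?thesis using that by auto
qed

lemma cf1_bound:
  assumes hf: "holo_bidisc f" and r: "0 < r" "r < 1"
    and M: "\<And>z1 z2. norm z1 \<le> r \<Longrightarrow> norm z2 \<le> r \<Longrightarrow> norm (f (z1, z2)) \<le> M"
    and z2: "norm z2 \<le> r"
  shows "norm (cf1 f m z2) \<le> M / r ^ m"
proof -
  have z2D: "z2 \<in> unit_disc" using z2 r by auto
  have h: "(\<lambda>z1. f (z1, z2)) holomorphic_on unit_disc" using holo_slice1[OF hf z2D] .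
  have "norm ((deriv ^^ m) (\<lambda>z1. f (z1, z2)) 0) \<le> fact m * M / r ^ m"
  proof (rule Cauchy_inequality)
    show "(\<lambda>z1. f (z1, z2)) holomorphic_on ball 0 r"
      by (rule holomorphic_on_subset[OF h]) (use r in auto)
    show "continuous_on (cball 0 r) (\<lambda>z1. f (z1, z2))"
      by (rule holomorphic_on_imp_continuous_on, rule holomorphic_on_subset[OF h]) (use r in auto)
    show "norm (f (x, z2)) \<le> M" if "norm (0 - x) = r" for x
      using that by (intro M z2) auto
  qed (use r in auto)
  then show ?thesis
    by (simp add: cf1_def norm_divide field_simps)
qed

lemma cfa_bound:
  assumes hf: "holo_bidisc f" and r: "0 < r" "r < 1"
    and M: "\<And>z1 z2. norm z1 \<le> r \<Longrightarrow> norm z2 \<le> r \<Longrightarrow> norm (f (z1, z2)) \<le> M"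
  shows "norm (cfa f m n) \<le> M / r ^ m / r ^ n"
proof -
  have h: "cf1 f m holomorphic_on unit_disc" using cf1_holo[OF hf] .
  have "norm ((deriv ^^ n) (cf1 f m) 0) \<le> fact n * (M / r ^ m) / r ^ n"
  proof (rule Cauchy_inequality)
    show "cf1 f m holomorphic_on ball 0 r"
      by (rule holomorphic_on_subset[OF h]) (use r in auto)
    show "continuous_on (cball 0 r) (cf1 f m)"
      by (rule holomorphic_on_imp_continuous_on, rule holomorphic_on_subset[OF h]) (use r in auto)
    show "norm (cf1 f m x) \<le> M / r ^ m" if "norm (0 - x) = r" for x
      using that by (intro cf1_bound[OF hf r M]) auto
  qed (use r in auto)
  then show ?thesis
    by (simp add: cfa_def norm_divide field_simps)
qed

lemma cf1_sums:
  assumes hf: "holo_bidisc f" and z1: "z1 \<in> unit_disc" and z2: "z2 \<in> unit_disc"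
  shows "(\<lambda>m. cf1 f m z2 * z1 ^ m) sums f (z1, z2)"
  using holomorphic_power_series[OF holo_slice1[OF hf z2] z1] by (simp add: cf1_def)

lemma cfa_sums:
  assumes hf: "holo_bidisc f" and z2: "z2 \<in> unit_disc"
  shows "(\<lambda>n. cfa f m n * z2 ^ n) sums cf1 f m z2"
  using holomorphic_power_series[OF cf1_holo[OF hf] z2] by (simp add: cfa_def)

lemma geom_prod_summable:
  fixes p q :: real
  assumes "0 \<le> p" "p < 1" "0 \<le> q" "q < 1" "0 \<le> M"
  shows "(\<lambda>(m,n). M * p ^ m * q ^ n) summable_on UNIV"
proof -
  have row: "((\<lambda>n. M * p ^ m * q ^ n) has_sum (M * p ^ m / (1 - q))) UNIV" for m
  proof -
    have "(\<lambda>n. M * p ^ m * q ^ n) sums (M * p ^ m * (1 / (1 - q)))"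
      by (intro sums_mult geometric_sums) (use assms in auto)
    then show ?thesis
      by (intro sums_nonneg_imp_has_sum) (use assms in auto)
  qed
  have col: "(\<lambda>m. M * p ^ m / (1 - q)) summable_on UNIV"
  proof -
    have "(\<lambda>m. M / (1 - q) * p ^ m) sums (M / (1 - q) * (1 / (1 - p)))"
      by (intro sums_mult geometric_sums) (use assms in auto)
    then have "((\<lambda>m. M / (1 - q) * p ^ m) has_sum (M / (1 - q) * (1 / (1 - p)))) UNIV"
      by (intro sums_nonneg_imp_has_sum) (use assms in auto)
    then show ?thesis by (auto simp: summable_on_def field_simps)
  qed
  have "(\<lambda>(m,n). M * p ^ m * q ^ n) summable_on Sigma UNIV (\<lambda>_. UNIV)"
    by (rule summable_on_SigmaI[OF _ col]) (use row assms in auto)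
  then show ?thesis by simp
qed

lemma H2_rep:
  assumes hf: "holo_bidisc f" and z1: "z1 \<in> unit_disc" and z2: "z2 \<in> unit_disc"
  shows "((\<lambda>(m,n). cfa f m n * z1 ^ m * z2 ^ n) has_sum f (z1, z2)) UNIV"
proof -
  define r where "r = (max (norm z1) (norm z2) + 1) / 2"
  have r: "0 < r" "r < 1" "norm z1 < r" "norm z2 < r"
    using z1 z2 by (auto simp: r_def max_def) (smt (verit) norm_ge_zero)+
  obtain M where M: "M > 0" "\<And>z1 z2. norm z1 \<le> r \<Longrightarrow> norm z2 \<le> r \<Longrightarrow> norm (f (z1, z2)) \<le> M"
    using f_bound[OF hf r(1,2)] by blast
  define p where "p = norm z1 / r"
  define q where "q = norm z2 / r"
  have pq: "0 \<le> p" "p < 1" "0 \<le> q" "q < 1" using r by (auto simp: p_def q_def)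
  have bnd: "norm (cfa f m n * z1 ^ m * z2 ^ n) \<le> M * p ^ m * q ^ n" for m n
  proof -
    have "norm (cfa f m n * z1 ^ m * z2 ^ n) = norm (cfa f m n) * norm z1 ^ m * norm z2 ^ n"
      by (simp add: norm_mult norm_power)
    also have "\<dots> \<le> (M / r ^ m / r ^ n) * norm z1 ^ m * norm z2 ^ n"
      by (intro mult_right_mono cfa_bound[OF hf r(1,2) M(2)]) auto
    also have "\<dots> = M * p ^ m * q ^ n"
      using r by (simp add: p_def q_def power_divide field_simps)
    finally show ?thesis .
  qed
  have summ: "(\<lambda>(m,n). cfa f m n * z1 ^ m * z2 ^ n) summable_on UNIV"
  proof -
    have "(\<lambda>x. norm ((\<lambda>(m,n). cfa f m n * z1 ^ m * z2 ^ n) x)) summable_on UNIV"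
      by (rule summable_on_comparison_test[OF geom_prod_summable[OF pq less_imp_le[OF M(1)]]])
         (auto simp: bnd)
    then show ?thesis
      by (simp add: summable_on_iff_abs_summable_on_complex)
  qed
  have rows: "((\<lambda>n. cfa f m n * z1 ^ m * z2 ^ n) has_sum (cf1 f m z2 * z1 ^ m)) UNIV" for m
  proof (rule norm_summable_imp_has_sum)
    have "summable (\<lambda>n. M * p ^ m * q ^ n)"
      by (intro summable_mult summable_geometric) (use pq in auto)
    then show "summable (\<lambda>n. norm (cfa f m n * z1 ^ m * z2 ^ n))"
      by (rule summable_comparison_test'[where N=0]) (use bnd in auto)
    have "(\<lambda>n. z1 ^ m * (cfa f m n * z2 ^ n)) sums (z1 ^ m * cf1 f m z2)"
      by (rule sums_mult[OF cfa_sums[OF hf z2]])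
    then show "(\<lambda>n. cfa f m n * z1 ^ m * z2 ^ n) sums (cf1 f m z2 * z1 ^ m)"
      by (simp add: ac_simps)
  qed
  have col: "((\<lambda>m. cf1 f m z2 * z1 ^ m) has_sum f (z1, z2)) UNIV"
  proof (rule norm_summable_imp_has_sum[OF _ cf1_sums[OF hf z1 z2]])
    have "summable (\<lambda>m. M * p ^ m)"
      by (intro summable_mult summable_geometric) (use pq in auto)
    moreover have "norm (cf1 f m z2 * z1 ^ m) \<le> M * p ^ m" for m
    proof -
      have "norm (cf1 f m z2 * z1 ^ m) = norm (cf1 f m z2) * norm z1 ^ m"
        by (simp add: norm_mult norm_power)
      also have "\<dots> \<le> (M / r ^ m) * norm z1 ^ m"
        by (intro mult_right_mono cf1_bound[OF hf r(1,2) M(2)]) (use r in auto)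
      also have "\<dots> = M * p ^ m"
        using r by (simp add: p_def power_divide field_simps)
      finally show ?thesis .
    qed
    ultimately show "summable (\<lambda>m. norm (cf1 f m z2 * z1 ^ m))"
      using summable_comparison_test'[where N=0 and g="\<lambda>m. M * p ^ m" and f="\<lambda>m. norm (cf1 f m z2 * z1 ^ m)"]
      by auto
  qed
  have "((\<lambda>(m,n). cfa f m n * z1 ^ m * z2 ^ n) has_sum f (z1, z2)) (Sigma UNIV (\<lambda>_. UNIV))"
    by (rule has_sum_SigmaI[where g="\<lambda>m. cf1 f m z2 * z1 ^ m"]) (use rows col summ in auto)
  then show ?thesis by simp
qed

lemma ps_unique:
  fixes a :: "nat \<Rightarrow> complex"
  assumes r: "r > 0" and s: "\<And>z. z \<in> ball 0 r \<Longrightarrow> (\<lambda>n. a n * z ^ n) sums g z"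
  shows "a n = (deriv ^^ n) g 0 / fact n"
proof -
  define F where "F = Abs_fps a"
  have "g has_fps_expansion F"
    unfolding has_fps_expansion_def
  proof
    have "summable (\<lambda>n. a n * (of_real (r/2)) ^ n)"
      using s[of "of_real (r/2)"] r by (auto simp: sums_iff)
    then have "conv_radius a \<ge> norm (of_real (r/2) :: complex)"
      by (rule conv_radius_geI)
    then show "0 < fps_conv_radius F"
      using r by (auto simp: fps_conv_radius_def F_def ereal_less_le intro: order.strict_trans2[rotated])
    have "\<forall>\<^sub>F z in nhds 0. z \<in> ball (0::complex) r"
      using r by (intro eventually_nhds_in_open) auto
    then show "\<forall>\<^sub>F z in nhds 0. eval_fps F z = g z"
      by eventually_elim (auto simp: eval_fps_def F_def sums_unique[OF s, symmetric])
  qed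
  from fps_nth_fps_expansion[OF this, of n] show ?thesis by (simp add: F_def)
qed

lemma holo_swap:
  assumes hf: "holo_bidisc f"
  shows "holo_bidisc (\<lambda>(a,b). f (b,a))"
proof -
  have "continuous_on (unit_disc \<times> unit_disc) (\<lambda>x. f (snd x, fst x))"
    by (rule continuous_on_compose2[OF holo_cont[OF hf]]) (auto intro!: continuous_intros)
  then show ?thesis using hf by (simp add: holo_bidisc_def case_prod_beta)
qed

lemma cfa_swap:
  assumes hf: "holo_bidisc f"
  shows "cfa (\<lambda>(a,b). f (b,a)) n m = cfa f m n"
proof -
  define f' where "f' = (\<lambda>(a,b). f (b,a))"
  have hf': "holo_bidisc f'" unfolding f'_def by (rule holo_swap[OF hf])
  define b where "b = (\<lambda>m n. cfa f' n m)"
  define R where "R = (\<lambda>m z2. \<Sum>\<^sub>\<infinity>n. b m n * z2 ^ n)"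
  have T: "((\<lambda>(m,n). b m n * z1 ^ m * z2 ^ n) has_sum f (z1, z2)) (Sigma UNIV (\<lambda>_. UNIV))"
    if z1: "z1 \<in> unit_disc" and z2: "z2 \<in> unit_disc" for z1 z2
  proof -
    have "((\<lambda>(n,m). cfa f' n m * z2 ^ n * z1 ^ m) has_sum f' (z2, z1)) UNIV"
      by (rule H2_rep[OF hf' z2 z1])
    then have "((\<lambda>(n,m). b m n * z2 ^ n * z1 ^ m) has_sum f (z1, z2)) (UNIV \<times> UNIV)"
      by (simp add: f'_def b_def)
    then show ?thesis
      by (subst (asm) has_sum_swap) (simp add: case_prod_beta ac_simps)
  qed
  have rowsum: "((\<lambda>n. b m n * z2 ^ n) has_sum R m z2) UNIV" if z2: "z2 \<in> unit_disc" for m z2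
  proof -
    have hD: "(1/2::complex) \<in> unit_disc" by simp
    have "(\<lambda>n. b m n * (1/2) ^ m * z2 ^ n) summable_on UNIV"
      using summable_on_SigmaD1[where f="\<lambda>m n. b m n * (1/2) ^ m * z2 ^ n" and A=UNIV and B="\<lambda>_. UNIV"] T[OF hD z2]
      by (auto simp: summable_on_def)
    then have "(\<lambda>n. 2 ^ m * (b m n * (1/2) ^ m * z2 ^ n)) summable_on UNIV"
      by (rule summable_on_cmult_right)
    then have "(\<lambda>n. b m n * z2 ^ n) summable_on UNIV"
      by (simp add: power_one_over field_simps)
    then show ?thesis by (simp add: R_def)
  qed
  have colsum: "(\<lambda>m. R m z2 * z1 ^ m) sums f (z1, z2)"
    if z1: "z1 \<in> unit_disc" and z2: "z2 \<in> unit_disc" for z1 z2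
  proof -
    have "((\<lambda>m. R m z2 * z1 ^ m) has_sum f (z1, z2)) UNIV"
    proof (rule has_sum_SigmaD[OF T[OF z1 z2]])
      fix m :: nat
      have "((\<lambda>n. z1 ^ m * (b m n * z2 ^ n)) has_sum (z1 ^ m * R m z2)) UNIV"
        by (rule has_sum_cmult_right[OF rowsum[OF z2]])
      then show "((\<lambda>y. case (m, y) of (m, n) \<Rightarrow> b m n * z1 ^ m * z2 ^ n) has_sum R m z2 * z1 ^ m) UNIV"
        by (simp add: ac_simps)
    qed
    then show ?thesis by (rule has_sum_imp_sums)
  qed
  have Rm: "R m z2 = cf1 f m z2" if z2: "z2 \<in> unit_disc" for m z2
  proof -
    have "R m z2 = (deriv ^^ m) (\<lambda>z1. f (z1, z2)) 0 / fact m"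
      by (rule ps_unique[where r=1]) (use colsum z2 in auto)
    then show ?thesis by (simp add: cf1_def)
  qed
  have "b m n = (deriv ^^ n) (cf1 f m) 0 / fact n"
  proof (rule ps_unique[where r=1])
    fix z2 :: complex assume "z2 \<in> ball 0 1"
    then show "(\<lambda>n. b m n * z2 ^ n) sums cf1 f m z2"
      using has_sum_imp_sums[OF rowsum] Rm by auto
  qed simp
  then show ?thesis by (simp add: b_def cfa_def f'_def)
qed



definition ee :: "real \<Rightarrow> complex" where
  "ee t = exp (2 * of_real pi * \<i> * of_real t)"

lemma ee_norm [simp]: "norm (ee t) = 1"
  by (simp add: ee_def norm_exp_eq_Re)

lemma ee_nz [simp]: "ee t \<noteq> 0"
  by (simp add: ee_def)

lemma ee_cnj: "cnj (ee t) = inverse (ee t)"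
  by (simp add: ee_def exp_cnj exp_minus[symmetric])

lemma ee_cont [continuous_intros]: "continuous_on A ee"
  unfolding ee_def by (intro continuous_intros)

lemma ee_in_ball: "R > 1 \<Longrightarrow> ee t \<in> ball 0 R"
  by simp

lemma coef_int:
  assumes h: "h holomorphic_on ball 0 R" and R: "R > 1"
  shows "((\<lambda>t. h (ee t) * cnj (ee t) ^ k) has_integral ((deriv ^^ k) h 0 / fact k)) {0..1}"
proof -
  have "((\<lambda>u. h u / (u - 0) ^ Suc k) has_contour_integral
      complex_of_real (2 * pi) * \<i> / fact k * (deriv ^^ k) h 0) (circlepath 0 1)"
  proof (rule Cauchy_has_contour_integral_higher_derivative_circlepath)
    show "continuous_on (cball 0 1) h"
      by (rule holomorphic_on_imp_continuous_on, rule holomorphic_on_subset[OF h]) (use R in auto)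
    show "h holomorphic_on ball 0 1"
      by (rule holomorphic_on_subset[OF h]) (use R in auto)
  qed auto
  then have I: "((\<lambda>x. h (ee x) / ee x ^ Suc k * vector_derivative (circlepath 0 1) (at x within {0..1})) has_integral
      complex_of_real (2 * pi) * \<i> / fact k * (deriv ^^ k) h 0) {0..1}"
    by (simp add: has_contour_integral_def circlepath ee_def)
  have "((\<lambda>x. (2 * pi * \<i>) * (h (ee x) * cnj (ee x) ^ k)) has_integral
      complex_of_real (2 * pi) * \<i> / fact k * (deriv ^^ k) h 0) {0..1}"
  proof (rule has_integral_eq[OF _ I])
    fix x :: real assume x: "x \<in> {0..1}"
    have "vector_derivative (circlepath 0 1) (at x within {0..1}) = 2 * pi * \<i> * ee x"
      using vector_derivative_circlepath01[of x 0 1] x by (simp add: ee_def)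
    then show "h (ee x) / ee x ^ Suc k * vector_derivative (circlepath 0 1) (at x within {0..1}) =
        (2 * pi * \<i>) * (h (ee x) * cnj (ee x) ^ k)"
      by (simp add: ee_cnj field_simps power_inverse)
  qed
  then have "((\<lambda>x. (1 / (2 * pi * \<i>)) * ((2 * pi * \<i>) * (h (ee x) * cnj (ee x) ^ k))) has_integral
      (1 / (2 * pi * \<i>)) * (complex_of_real (2 * pi) * \<i> / fact k * (deriv ^^ k) h 0)) {0..1}"
    by (rule has_integral_mult_right)
  then show ?thesis by simp
qed

lemma orth_int:
  "integral {0..1} (\<lambda>t. ee t ^ j * cnj (ee t) ^ k) = (if j = k then 1 else 0)"
proof -
  define a where "a = 2 * of_real pi * \<i> * (of_int (int j - int k) :: complex)"
  have eq: "ee t ^ j * cnj (ee t) ^ k = exp (a * of_real t)" for t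
  proof -
    have "ee t ^ j * cnj (ee t) ^ k = exp (of_nat j * (2 * of_real pi * \<i> * of_real t)) *
         exp (- (of_nat k * (2 * of_real pi * \<i> * of_real t)))"
    proof -
      have 1: "ee t ^ j = exp (of_nat j * (2 * of_real pi * \<i> * of_real t))"
        by (simp add: ee_def exp_of_nat_mult[symmetric])
      have 2: "cnj (ee t) ^ k = exp (- (of_nat k * (2 * of_real pi * \<i> * of_real t)))"
        unfolding ee_cnj power_inverse exp_minus
        by (simp add: ee_def exp_of_nat_mult[symmetric])
      show ?thesis by (simp only: 1 2)
    qed
    also have "\<dots> = exp (a * of_real t)"
      by (simp add: a_def exp_add[symmetric] algebra_simps)
    finally show ?thesis .
  qed
  show ?thesis
  proof (cases "j = k")
    case True
    then show ?thesis by (simp add: ee_cnj power_inverse field_simps)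
  next
    case False
    then have "a \<noteq> 0" by (simp add: a_def)
    have "exp a = 1"
      using exp_2pi_1_int[of "int j - int k"] by (simp add: a_def algebra_simps)
    then show ?thesis
      using Kronecker_Approximation_Theorem.integral_exp[of 1 a] \<open>a \<noteq> 0\<close> False
      by (simp add: eq)
  qed
qed

lemma bessel01:
  assumes h: "h holomorphic_on ball 0 R" and R: "R > 1"
  shows "(\<Sum>k<N. (norm ((deriv ^^ k) h 0 / fact k))\<^sup>2) \<le> integral {0..1} (\<lambda>t. (norm (h (ee t)))\<^sup>2)"
proof -
  define \<beta> where "\<beta> k = (deriv ^^ k) h 0 / fact k" for k
  define g where "g t = h (ee t)" for t
  define P where "P t = (\<Sum>k<N. \<beta> k * ee t ^ k)" for t
  define S where "S = (\<Sum>k<N. (norm (\<beta> k))\<^sup>2)"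
  have hc: "continuous_on (ball 0 R) h" using holomorphic_on_imp_continuous_on[OF h] .
  have cg: "continuous_on {0..1} g"
    unfolding g_def by (rule continuous_on_compose2[OF hc ee_cont]) (use R in auto)
  have cP: "continuous_on {0..1} P"
    unfolding P_def by (intro continuous_intros)
  have int: "F integrable_on {0..1}" if "continuous_on {0..1} F" for F :: "real \<Rightarrow> complex"
    using integrable_continuous_interval[OF that] .
  have intr: "F integrable_on {0..1}" if "continuous_on {0..1} F" for F :: "real \<Rightarrow> real"
    using integrable_continuous_interval[OF that] .
  have Sq: "of_real S = (\<Sum>k<N. \<beta> k * cnj (\<beta> k))"
    by (simp only: S_def of_real_sum complex_norm_square)
  have coef: "integral {0..1} (\<lambda>t. g t * cnj (ee t) ^ k) = \<beta> k" for k
    using coef_int[OF h R, of k] by (simp add: integral_unique g_def \<beta>_def)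
  have c1: "integral {0..1} (\<lambda>t. g t * cnj (P t)) = of_real S"
  proof -
    have "integral {0..1} (\<lambda>t. g t * cnj (P t)) = integral {0..1} (\<lambda>t. \<Sum>k<N. cnj (\<beta> k) * (g t * cnj (ee t) ^ k))"
      by (simp add: P_def sum_distrib_left ac_simps)
    also have "\<dots> = (\<Sum>k<N. integral {0..1} (\<lambda>t. cnj (\<beta> k) * (g t * cnj (ee t) ^ k)))"
      by (rule integral_sum) (auto intro!: int continuous_intros cg)
    also have "\<dots> = (\<Sum>k<N. cnj (\<beta> k) * \<beta> k)"
      by (simp add: coef)
    also have "\<dots> = of_real S"
      by (simp add: Sq mult.commute)
    finally show ?thesis .
  qed
  have c2: "integral {0..1} (\<lambda>t. P t * cnj (P t)) = of_real S"
  proof -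
    have "integral {0..1} (\<lambda>t. P t * cnj (P t)) =
        integral {0..1} (\<lambda>t. \<Sum>j<N. \<Sum>k<N. \<beta> j * cnj (\<beta> k) * (ee t ^ j * cnj (ee t) ^ k))"
      apply (simp add: P_def sum_distrib_left sum_distrib_right ac_simps)
      apply (rule arg_cong[where f="integral {0..1}"], rule ext, rule sum.swap)
      done
    also have "\<dots> = (\<Sum>j<N. integral {0..1} (\<lambda>t. \<Sum>k<N. \<beta> j * cnj (\<beta> k) * (ee t ^ j * cnj (ee t) ^ k)))"
      by (rule integral_sum) (auto intro!: int continuous_intros)
    also have "\<dots> = (\<Sum>j<N. \<Sum>k<N. integral {0..1} (\<lambda>t. \<beta> j * cnj (\<beta> k) * (ee t ^ j * cnj (ee t) ^ k)))"
      by (intro sum.cong refl integral_sum) (auto intro!: int continuous_intros)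
    also have "\<dots> = (\<Sum>j<N. \<Sum>k<N. \<beta> j * cnj (\<beta> k) * (if j = k then 1 else 0))"
      by (simp add: orth_int)
    also have "\<dots> = of_real S"
      by (simp add: Sq if_distrib sum.delta cong: if_cong)
    finally show ?thesis .
  qed
  have c3: "integral {0..1} (\<lambda>t. P t * cnj (g t)) = of_real S"
  proof -
    have "integral {0..1} (\<lambda>t. P t * cnj (g t)) = cnj (integral {0..1} (\<lambda>t. g t * cnj (P t)))"
      by (simp add: integral_cnj mult.commute)
    then show ?thesis by (simp add: c1)
  qed
  have c0: "integral {0..1} (\<lambda>t. g t * cnj (g t)) = of_real (integral {0..1} (\<lambda>t. (norm (g t))\<^sup>2))"
  proof -
    have "((\<lambda>t. complex_of_real ((norm (g t))\<^sup>2)) has_integral complex_of_real (integral {0..1} (\<lambda>t. (norm (g t))\<^sup>2))) {0..1}"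
      by (rule has_integral_of_real) (intro integrable_integral intr continuous_intros cg)
    then show ?thesis
      unfolding complex_norm_square by (rule integral_unique)
  qed
  have "of_real (integral {0..1} (\<lambda>t. (norm (g t - P t))\<^sup>2)) =
        integral {0..1} (\<lambda>t. (g t - P t) * cnj (g t - P t))"
  proof -
    have "((\<lambda>t. complex_of_real ((norm (g t - P t))\<^sup>2)) has_integral complex_of_real (integral {0..1} (\<lambda>t. (norm (g t - P t))\<^sup>2))) {0..1}"
      by (rule has_integral_of_real) (intro integrable_integral intr continuous_intros cg cP)
    then show ?thesis
      unfolding complex_norm_square by (rule integral_unique[symmetric])
  qed
  also have "\<dots> = integral {0..1} (\<lambda>t. g t * cnj (g t) - g t * cnj (P t) - P t * cnj (g t) + P t * cnj (P t))"
    by (simp add: algebra_simps)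
  also have "\<dots> = integral {0..1} (\<lambda>t. g t * cnj (g t)) - integral {0..1} (\<lambda>t. g t * cnj (P t))
       - integral {0..1} (\<lambda>t. P t * cnj (g t)) + integral {0..1} (\<lambda>t. P t * cnj (P t))"
    by (subst integral_add integral_diff, (auto intro!: int continuous_intros cg cP)[2])+ simp
  also have "\<dots> = of_real (integral {0..1} (\<lambda>t. (norm (g t))\<^sup>2) - S)"
    by (simp add: c0 c1 c2 c3)
  finally have eq: "integral {0..1} (\<lambda>t. (norm (g t - P t))\<^sup>2) = integral {0..1} (\<lambda>t. (norm (g t))\<^sup>2) - S"
    using of_real_eq_iff by blast
  have "0 \<le> integral {0..1} (\<lambda>t. (norm (g t - P t))\<^sup>2)"
    by (rule integral_nonneg) (auto intro!: intr continuous_intros cg cP)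
  then show ?thesis using eq by (simp add: S_def \<beta>_def g_def)
qed

lemma ee_cis: "ee t = cis (2 * pi * t)"
  by (simp add: ee_def cis_conv_exp mult.commute mult.left_commute)

lemma circ_int_conv:
  fixes G :: "real \<Rightarrow> real"
  assumes cG: "continuous_on UNIV G" and G0: "\<And>x. G x \<ge> 0"
  shows "circ_int (\<lambda>\<theta>. ennreal (G \<theta>)) = ennreal (integral {0..1} (\<lambda>t. G (2 * pi * t)))"
proof -
  have mG: "G \<in> borel_measurable borel" by (rule borel_measurable_continuous_onI[OF cG])
  define f where "f \<theta> = ennreal (indicator {0..2*pi} \<theta> / (2*pi)) * ennreal (G \<theta>)" for \<theta>
  have mf: "f \<in> borel_measurable borel" unfolding f_def using mG by measurable
  have "circ_int (\<lambda>\<theta>. ennreal (G \<theta>)) = integral\<^sup>N lborel f"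
    by (simp add: circ_int_def f_def[abs_def])
  also have "\<dots> = ennreal \<bar>2*pi\<bar> * (\<integral>\<^sup>+ x. f (0 + (2*pi) * x) \<partial>lborel)"
    by (rule nn_integral_real_affine[OF mf]) simp
  also have "\<dots> = (\<integral>\<^sup>+ x. ennreal (2*pi) * f (0 + (2*pi) * x) \<partial>lborel)"
    by (subst nn_integral_cmult) (use mf in auto)
  also have "\<dots> = (\<integral>\<^sup>+ x. ennreal (indicator {0..1} x * G (2 * pi * x)) \<partial>lborel)"
  proof (rule nn_integral_cong)
    fix x :: real
    have ind: "indicator {0..2*pi} (2 * pi * x) = (indicator {0..1} x :: real)"
      by (auto simp: indicator_def zero_le_mult_iff) (use pi_gt_zero in linarith)+
    show "ennreal (2*pi) * f (0 + (2*pi) * x) = ennreal (indicator {0..1} x * G (2 * pi * x))"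
      unfolding f_def
      by (simp add: ennreal_mult'[symmetric] ennreal_mult''[symmetric] G0 ind)
  qed
  also have "\<dots> = ennreal (integral {0..1} (\<lambda>t. G (2 * pi * t)))"
  proof (rule nn_integral_has_integral_lebesgue)
    show "0 \<le> G (2 * pi * x)" for x by (rule G0)
    have "continuous_on {0..1} (\<lambda>t. G (2 * pi * t))"
      by (rule continuous_on_compose2[OF cG]) (auto intro!: continuous_intros)
    then show "((\<lambda>t. G (2 * pi * t)) has_integral integral {0..1} (\<lambda>t. G (2 * pi * t))) {0..1}"
      by (intro integrable_integral integrable_continuous_interval)
  qed
  finally show ?thesis .
qed

lemma circ_bessel:
  assumes h: "h holomorphic_on ball 0 R" and R: "R > 1"
  shows "ennreal (\<Sum>k<N. (norm ((deriv ^^ k) h 0 / fact k))\<^sup>2) \<le> circ_int (\<lambda>\<theta>. ennreal ((norm (h (cis \<theta>)))\<^sup>2))"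
proof -
  have hc: "continuous_on (ball 0 R) h" using holomorphic_on_imp_continuous_on[OF h] .
  have cG: "continuous_on UNIV (\<lambda>\<theta>. (norm (h (cis \<theta>)))\<^sup>2)"
    by (intro continuous_intros continuous_on_compose2[OF hc]) (use R in auto)
  have "circ_int (\<lambda>\<theta>. ennreal ((norm (h (cis \<theta>)))\<^sup>2)) = ennreal (integral {0..1} (\<lambda>t. (norm (h (ee t)))\<^sup>2))"
    by (subst circ_int_conv[OF cG]) (auto simp: ee_cis)
  then show ?thesis
    using bessel01[OF h R, of N] by (simp add: ennreal_leI)
qed



definition cpx :: "real \<times> real \<Rightarrow> complex" where "cpx p = Complex (fst p) (snd p)"

lemma cpx_cont: "continuous_on UNIV cpx"
proof -
  have eq: "cpx = (\<lambda>p. complex_of_real (fst p) + \<i> * complex_of_real (snd p))"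
    by (auto simp: cpx_def fun_eq_iff complex_eq_iff)
  show ?thesis unfolding eq by (intro continuous_intros)
qed

lemma cpx_meas [measurable]: "cpx \<in> borel_measurable (lborel \<Otimes>\<^sub>M lborel)"
proof -
  have "cpx \<in> borel_measurable borel" by (rule borel_measurable_continuous_onI[OF cpx_cont])
  then show ?thesis by (simp add: lborel_prod measurable_lborel1)
qed

lemma lborel_complex: "lborel = distr (lborel \<Otimes>\<^sub>M lborel) borel cpx"
proof (rule lborel_eqI)
  fix l u :: complex
  assume lu: "\<And>b. b \<in> Basis \<Longrightarrow> l \<bullet> b \<le> u \<bullet> b"
  then have lu1: "Re l \<le> Re u" and lu2: "Im l \<le> Im u"
    using lu[of 1] lu[of \<i>] by (auto simp: Basis_complex_def)
  have pre: "cpx -` box l u \<inter> space (lborel \<Otimes>\<^sub>M lborel) = {Re l<..<Re u} \<times> {Im l<..<Im u}"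
    by (auto simp: cpx_def mem_box Basis_complex_def space_pair_measure)
  have "emeasure (distr (lborel \<Otimes>\<^sub>M lborel) borel cpx) (box l u) =
        emeasure (lborel \<Otimes>\<^sub>M lborel) ({Re l<..<Re u} \<times> {Im l<..<Im u})"
    by (subst emeasure_distr) (auto simp: pre)
  also have "\<dots> = emeasure lborel {Re l<..<Re u} * emeasure lborel {Im l<..<Im u}"
    by (rule lborel.emeasure_pair_measure_Times) auto
  also have "\<dots> = ennreal (prod ((\<bullet>) (u - l)) Basis)"
    using lu1 lu2 by (simp add: Basis_complex_def ennreal_mult)
  finally show "emeasure (distr (lborel \<Otimes>\<^sub>M lborel) borel cpx) (box l u) = ennreal (prod ((\<bullet>) (u - l)) Basis)" .
qed simp

lemma nn_integral_complex:
  assumes F: "F \<in> borel_measurable borel"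
  shows "(\<integral>\<^sup>+ z. F z \<partial>lborel) = (\<integral>\<^sup>+ x. \<integral>\<^sup>+ y. F (Complex x y) \<partial>lborel \<partial>lborel)"
proof -
  have "(\<integral>\<^sup>+ z. F z \<partial>lborel) = (\<integral>\<^sup>+ p. F (cpx p) \<partial>(lborel \<Otimes>\<^sub>M lborel))"
    by (subst lborel_complex) (simp add: nn_integral_distr F)
  also have "\<dots> = (\<integral>\<^sup>+ x. \<integral>\<^sup>+ y. F (cpx (x, y)) \<partial>lborel \<partial>lborel)"
    by (rule lborel.nn_integral_fst[symmetric]) (use F in measurable)
  finally show ?thesis by (simp add: cpx_def)
qed

lemma meas_comp:
  assumes F: "F \<in> borel_measurable borel" and g: "continuous_on UNIV g"
  shows "(\<lambda>x. F (g x)) \<in> borel_measurable borel"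
  using measurable_compose[OF borel_measurable_continuous_onI[OF g] F] by (simp add: o_def)

lemma meas_comp2:
  fixes g :: "real \<times> real \<Rightarrow> 'b::topological_space"
  assumes F: "F \<in> borel_measurable borel" and g: "continuous_on UNIV g"
  shows "(\<lambda>x. F (g x)) \<in> borel_measurable (lborel \<Otimes>\<^sub>M lborel)"
  using meas_comp[OF F g] by (simp add: lborel_prod measurable_lborel1)

lemma shear_h:
  assumes F: "F \<in> borel_measurable borel"
  shows "(\<integral>\<^sup>+ z. F (Complex (Re z + a * Im z) (Im z)) \<partial>lborel) = (\<integral>\<^sup>+ z. F z \<partial>lborel)"
proof -
  have cc: "continuous_on UNIV (\<lambda>z. Complex (Re z + a * Im z) (Im z))"
  proof -
    have eq: "(\<lambda>z. Complex (Re z + a * Im z) (Im z)) = (\<lambda>z. of_real (Re z + a * Im z) + \<i> * of_real (Im z))"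
      by (auto simp: fun_eq_iff complex_eq_iff)
    show ?thesis unfolding eq by (intro continuous_intros)
  qed
  have cp: "continuous_on UNIV (\<lambda>p::real\<times>real. Complex (fst p + a * snd p) (snd p))"
    using continuous_on_compose2[OF cpx_cont, of UNIV "\<lambda>p. (fst p + a * snd p, snd p)"]
    by (auto simp: cpx_def intro!: continuous_intros)
  have cp2: "continuous_on UNIV (\<lambda>p::real\<times>real. Complex (fst p) (snd p))"
    using cpx_cont by (simp add: cpx_def)
  have cx: "continuous_on UNIV (\<lambda>x::real. Complex x y)" for y
    using continuous_on_compose2[OF cp2, of UNIV "\<lambda>x. (x, y)"] by (auto intro!: continuous_intros)
  have "(\<integral>\<^sup>+ z. F (Complex (Re z + a * Im z) (Im z)) \<partial>lborel) =
        (\<integral>\<^sup>+ x. \<integral>\<^sup>+ y. F (Complex (x + a * y) y) \<partial>lborel \<partial>lborel)"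
    by (subst nn_integral_complex[OF meas_comp[OF F cc]]) simp
  also have "\<dots> = (\<integral>\<^sup>+ y. \<integral>\<^sup>+ x. F (Complex (x + a * y) y) \<partial>lborel \<partial>lborel)"
    by (rule lborel_pair.Fubini'[symmetric]) (use meas_comp2[OF F cp] in \<open>simp add: case_prod_beta\<close>)
  also have "\<dots> = (\<integral>\<^sup>+ y. \<integral>\<^sup>+ x. F (Complex x y) \<partial>lborel \<partial>lborel)"
  proof (rule nn_integral_cong)
    fix y :: real
    have "(\<integral>\<^sup>+ x. F (Complex x y) \<partial>lborel) = ennreal \<bar>1\<bar> * (\<integral>\<^sup>+ x. F (Complex (a * y + 1 * x) y) \<partial>lborel)"
      by (rule nn_integral_real_affine[OF meas_comp[OF F cx]]) simp
    then show "(\<integral>\<^sup>+ x. F (Complex (x + a * y) y) \<partial>lborel) = (\<integral>\<^sup>+ x. F (Complex x y) \<partial>lborel)"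
      by (simp add: add.commute)
  qed
  also have "\<dots> = (\<integral>\<^sup>+ x. \<integral>\<^sup>+ y. F (Complex x y) \<partial>lborel \<partial>lborel)"
    by (rule lborel_pair.Fubini') (use meas_comp2[OF F cp2] in \<open>simp add: case_prod_beta\<close>)
  also have "\<dots> = (\<integral>\<^sup>+ z. F z \<partial>lborel)"
    by (rule nn_integral_complex[OF F, symmetric])
  finally show ?thesis .
qed

lemma shear_v:
  assumes F: "F \<in> borel_measurable borel"
  shows "(\<integral>\<^sup>+ z. F (Complex (Re z) (Im z + b * Re z)) \<partial>lborel) = (\<integral>\<^sup>+ z. F z \<partial>lborel)"
proof -
  have cc: "continuous_on UNIV (\<lambda>z. Complex (Re z) (Im z + b * Re z))"
  proof -
    have eq: "(\<lambda>z. Complex (Re z) (Im z + b * Re z)) = (\<lambda>z. of_real (Re z) + \<i> * of_real (Im z + b * Re z))"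
      by (auto simp: fun_eq_iff complex_eq_iff)
    show ?thesis unfolding eq by (intro continuous_intros)
  qed
  have cp2: "continuous_on UNIV (\<lambda>p::real\<times>real. Complex (fst p) (snd p))"
    using cpx_cont by (simp add: cpx_def)
  have cy: "continuous_on UNIV (\<lambda>y::real. Complex x y)" for x
    using continuous_on_compose2[OF cp2, of UNIV "\<lambda>y. (x, y)"] by (auto intro!: continuous_intros)
  have "(\<integral>\<^sup>+ z. F (Complex (Re z) (Im z + b * Re z)) \<partial>lborel) =
        (\<integral>\<^sup>+ x. \<integral>\<^sup>+ y. F (Complex x (y + b * x)) \<partial>lborel \<partial>lborel)"
    by (subst nn_integral_complex[OF meas_comp[OF F cc]]) simp
  also have "\<dots> = (\<integral>\<^sup>+ x. \<integral>\<^sup>+ y. F (Complex x y) \<partial>lborel \<partial>lborel)"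
  proof (rule nn_integral_cong)
    fix x :: real
    have "(\<integral>\<^sup>+ y. F (Complex x y) \<partial>lborel) = ennreal \<bar>1\<bar> * (\<integral>\<^sup>+ y. F (Complex x (b * x + 1 * y)) \<partial>lborel)"
      by (rule nn_integral_real_affine[OF meas_comp[OF F cy]]) simp
    then show "(\<integral>\<^sup>+ y. F (Complex x (y + b * x)) \<partial>lborel) = (\<integral>\<^sup>+ y. F (Complex x y) \<partial>lborel)"
      by (simp add: add.commute)
  qed
  also have "\<dots> = (\<integral>\<^sup>+ z. F z \<partial>lborel)"
    by (rule nn_integral_complex[OF F, symmetric])
  finally show ?thesis .
qed

lemma rot_small:
  assumes F: "F \<in> borel_measurable borel" and c: "cos (\<theta>/2) \<noteq> 0"
  shows "(\<integral>\<^sup>+ z. F (cis \<theta> * z) \<partial>lborel) = (\<integral>\<^sup>+ z. F z \<partial>lborel)"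
proof -
  define \<tau> where "\<tau> = sin (\<theta>/2) / cos (\<theta>/2)"
  define s where "s = sin \<theta>"
  define Hm where "Hm z = Complex (Re z + (-\<tau>) * Im z) (Im z)" for z
  define V where "V z = Complex (Re z) (Im z + s * Re z)" for z
  define \<sigma> where "\<sigma> = sin (\<theta>/2)"
  define \<kappa> where "\<kappa> = cos (\<theta>/2)"
  have sc: "\<sigma>^2 = 1 - \<kappa>^2" by (simp add: \<sigma>_def \<kappa>_def sin_squared_eq)
  have k0: "\<kappa> \<noteq> 0" using c by (simp add: \<kappa>_def)
  have sd: "sin \<theta> = 2 * \<sigma> * \<kappa>" using sin_double[of "\<theta>/2"] by (simp add: \<sigma>_def \<kappa>_def)
  have cd: "cos \<theta> = 1 - 2 * \<sigma>^2" using cos_double_sin[of "\<theta>/2"] by (simp add: \<sigma>_def)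
  have t: "\<tau> = \<sigma> / \<kappa>" by (simp add: \<tau>_def \<sigma>_def \<kappa>_def)
  have cs1: "cos \<theta> = 1 - \<tau> * s"
    unfolding s_def sd cd t using k0 by (simp add: field_simps power2_eq_square)
  have cs2: "sin \<theta> = 2 * \<tau> - s * \<tau>^2"
  proof -
    have "2 * \<tau> - s * \<tau>^2 = 2 * \<sigma> * (1 - \<sigma>^2) / \<kappa>"
      unfolding s_def sd t using k0 by (simp add: field_simps power2_eq_square)
    also have "\<dots> = 2 * \<sigma> * \<kappa>"
      unfolding sc using k0 by (simp add: field_simps power2_eq_square)
    finally show ?thesis by (simp add: sd)
  qed
  have rot: "cis \<theta> * z = Hm (V (Hm z))" for z
  proof (rule complex_eqI)
    show "Re (cis \<theta> * z) = Re (Hm (V (Hm z)))"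
      by (simp add: Hm_def V_def cs1 cs2 algebra_simps power2_eq_square)
    show "Im (cis \<theta> * z) = Im (Hm (V (Hm z)))"
      by (simp add: Hm_def V_def cs1 s_def algebra_simps power2_eq_square)
  qed
  have cH: "continuous_on UNIV Hm"
  proof -
    have eq: "Hm = (\<lambda>z. of_real (Re z + (-\<tau>) * Im z) + \<i> * of_real (Im z))"
      by (auto simp: fun_eq_iff complex_eq_iff Hm_def)
    show ?thesis unfolding eq by (intro continuous_intros)
  qed
  have cV: "continuous_on UNIV V"
  proof -
    have eq: "V = (\<lambda>z. of_real (Re z) + \<i> * of_real (Im z + s * Re z))"
      by (auto simp: fun_eq_iff complex_eq_iff V_def)
    show ?thesis unfolding eq by (intro continuous_intros)
  qed
  have m1: "(\<lambda>w. F (Hm (V w))) \<in> borel_measurable borel"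
    by (rule meas_comp[OF F]) (intro continuous_on_compose2[OF cH cV]; auto)
  have m2: "(\<lambda>w. F (Hm w)) \<in> borel_measurable borel"
    by (rule meas_comp[OF F cH])
  have "(\<integral>\<^sup>+ z. F (cis \<theta> * z) \<partial>lborel) = (\<integral>\<^sup>+ z. F (Hm (V (Hm z))) \<partial>lborel)"
    by (simp add: rot)
  also have "\<dots> = (\<integral>\<^sup>+ z. F (Hm (V z)) \<partial>lborel)"
    using shear_h[OF m1, of "-\<tau>"] by (simp add: Hm_def)
  also have "\<dots> = (\<integral>\<^sup>+ z. F (Hm z) \<partial>lborel)"
    using shear_v[OF m2, of s] by (simp add: V_def)
  also have "\<dots> = (\<integral>\<^sup>+ z. F z \<partial>lborel)"
    using shear_h[OF F, of "-\<tau>"] by (simp add: Hm_def)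
  finally show ?thesis .
qed

lemma rot_inv:
  assumes F: "F \<in> borel_measurable borel" and th: "0 \<le> \<theta>" "\<theta> \<le> 2 * pi"
  shows "(\<integral>\<^sup>+ z. F (cis \<theta> * z) \<partial>lborel) = (\<integral>\<^sup>+ z. F z \<partial>lborel)"
proof -
  define \<phi> where "\<phi> = \<theta> / 3"
  have c: "cos (\<phi>/2) \<noteq> 0"
  proof -
    have "0 \<le> \<phi>/2" "\<phi>/2 < pi/2" using th pi_gt_zero unfolding \<phi>_def by linarith+
    then have "cos (\<phi>/2) > 0" by (intro cos_gt_zero_pi) auto
    then show ?thesis by simp
  qed
  have eq: "cis \<theta> = cis \<phi> * cis \<phi> * cis \<phi>"
    by (simp add: cis_mult \<phi>_def)
  have mc: "(\<lambda>z. G (cis \<phi> * z)) \<in> borel_measurable borel" if "G \<in> borel_measurable borel" for G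
    by (rule meas_comp[OF that]) (intro continuous_intros)
  have "(\<integral>\<^sup>+ z. F (cis \<theta> * z) \<partial>lborel) = (\<integral>\<^sup>+ z. (\<lambda>w. (\<lambda>u. F (cis \<phi> * u)) (cis \<phi> * w)) (cis \<phi> * z) \<partial>lborel)"
    by (simp add: eq mult.assoc)
  also have "\<dots> = (\<integral>\<^sup>+ z. (\<lambda>w. (\<lambda>u. F (cis \<phi> * u)) (cis \<phi> * w)) z \<partial>lborel)"
    by (rule rot_small[OF mc[OF mc[OF F]] c])
  also have "\<dots> = (\<integral>\<^sup>+ z. (\<lambda>u. F (cis \<phi> * u)) z \<partial>lborel)"
    by (rule rot_small[OF mc[OF F] c])
  also have "\<dots> = (\<integral>\<^sup>+ z. F z \<partial>lborel)"
    by (rule rot_small[OF F c])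
  finally show ?thesis .
qed



lemma radial_lower:
  "ennreal (1 / (128 * (real k + 1)^2)) \<le>
     (\<integral>\<^sup>+ z. ennreal (indicator unit_disc z * ((1 - norm z) * norm z ^ (2*k)) / pi) \<partial>lborel)"
proof -
  define K where "K = real k + 1"
  have K1: "K \<ge> 1" by (simp add: K_def)
  define s where "s = 1 - 1 / (4 * K)"
  define t where "t = 1 - 1 / (8 * K)"
  have s0: "3/4 \<le> s" and st: "s < t" and t1: "t < 1"
    using K1 by (auto simp: s_def t_def field_simps)
  define A where "A = ball (0::complex) t - ball 0 s"
  define m where "m = (1 / (8 * K)) * (1/2) / pi"
  have m0: "m \<ge> 0" using K1 by (simp add: m_def)
  have spow: "s ^ (2*k) \<ge> 1/2"
  proof -
    have "1 + real (2*k) * (- 1 / (4 * K)) \<le> (1 + (- 1 / (4 * K))) ^ (2*k)"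
      by (rule Bernoulli_inequality) (use K1 in \<open>simp add: field_simps\<close>)
    moreover have "1 + real (2*k) * (- 1 / (4 * K)) \<ge> 1/2"
      using K1 by (simp add: K_def field_simps)
    ultimately show ?thesis by (simp add: s_def)
  qed
  have pw: "ennreal (m * indicator A z) \<le> ennreal (indicator unit_disc z * ((1 - norm z) * norm z ^ (2*k)) / pi)" for z
  proof (cases "z \<in> A")
    case True
    then have zs: "s \<le> norm z" and zt: "norm z < t" by (auto simp: A_def)
    then have zD: "z \<in> unit_disc" using t1 by simp
    have a: "1 - norm z \<ge> 1 / (8 * K)" using zt by (simp add: t_def)
    have b: "norm z ^ (2*k) \<ge> 1/2"
      using spow power_mono[OF zs, of "2*k"] s0 by linarith
    have "(1 / (8 * K)) * (1/2) \<le> (1 - norm z) * norm z ^ (2*k)"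
      by (rule mult_mono[OF a b]) (use K1 zt t1 in auto)
    then have "m \<le> ((1 - norm z) * norm z ^ (2*k)) / pi"
      unfolding m_def using divide_right_mono[OF _ less_imp_le[OF pi_gt_zero]] by (simp add: field_simps)
    then show ?thesis using True zD by (simp add: ennreal_leI)
  qed auto
  have mA: "A \<in> sets lborel" by (simp add: A_def)
  have "emeasure lborel A = emeasure lborel (ball (0::complex) t) - emeasure lborel (ball (0::complex) s)"
    unfolding A_def
    by (rule emeasure_Diff) (use st s0 in \<open>auto simp: emeasure_ball\<close>)
  also have "\<dots> = ennreal (pi * t^2) - ennreal (pi * s^2)"
    using st s0 by (simp add: emeasure_ball unit_ball_vol_2 mult.commute)
  also have "\<dots> = ennreal (pi * (t^2 - s^2))"
    using s0 st by (subst ennreal_minus) (auto simp: algebra_simps)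
  finally have emA: "emeasure lborel A = ennreal (pi * (t^2 - s^2))" .
  have "(\<integral>\<^sup>+ z. ennreal (m * indicator A z) \<partial>lborel) = ennreal m * emeasure lborel A"
    using nn_integral_cmult_indicator[OF mA, of "ennreal m"]
    by (simp add: ennreal_mult'' ennreal_indicator)
  also have "\<dots> = ennreal (m * (pi * (t^2 - s^2)))"
    using m0 st s0 by (simp add: emA ennreal_mult)
  also have "m * (pi * (t^2 - s^2)) \<ge> 1 / (128 * (real k + 1)^2)"
  proof -
    have "t^2 - s^2 = (t - s) * (t + s)" by (simp add: algebra_simps power2_eq_square)
    also have "\<dots> \<ge> (1 / (8*K)) * 1"
      by (rule mult_mono) (use K1 s0 st t1 in \<open>auto simp: s_def t_def field_simps\<close>)
    finally have "t^2 - s^2 \<ge> 1 / (8*K)" by simp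
    then have "m * (pi * (t^2 - s^2)) \<ge> m * (pi * (1 / (8*K)))"
      using m0 by (intro mult_left_mono) auto
    also have "m * (pi * (1 / (8*K))) = 1 / (128 * K^2)"
      by (simp add: m_def field_simps power2_eq_square)
    finally show ?thesis by (simp add: K_def)
  qed
  then have "ennreal (1 / (128 * (real k + 1)^2)) \<le> ennreal (m * (pi * (t^2 - s^2)))"
    by (rule ennreal_leI)
  finally have "ennreal (1 / (128 * (real k + 1)^2)) \<le> (\<integral>\<^sup>+ z. ennreal (m * indicator A z) \<partial>lborel)"
    by simp
  also have "\<dots> \<le> (\<integral>\<^sup>+ z. ennreal (indicator unit_disc z * ((1 - norm z) * norm z ^ (2*k)) / pi) \<partial>lborel)"
    by (rule nn_integral_mono) (rule pw)
  finally show ?thesis .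
qed

lemma circ_int_one: "circ_int (\<lambda>\<theta>. 1) = 1"
  using circ_int_conv[of "\<lambda>_. 1"] by simp

lemma circ_int_const: "circ_int (\<lambda>\<theta>. c) = c"
proof -
  have "circ_int (\<lambda>\<theta>. c) = (\<integral>\<^sup>+ \<theta>. ennreal (indicator {0..2*pi} \<theta> / (2*pi)) * 1 \<partial>lborel) * c"
    unfolding circ_int_def by (subst nn_integral_multc) auto
  also have "\<dots> = c" using circ_int_one by (simp add: circ_int_def)
  finally show ?thesis .
qed

lemma meas_G:
  assumes W: "continuous_on unit_disc W"
  shows "(\<lambda>z. ennreal (indicator unit_disc z * W z / pi)) \<in> borel_measurable borel"
proof -
  have "(\<lambda>z. indicator unit_disc z *\<^sub>R (W z / pi)) \<in> borel_measurable borel"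
    by (rule borel_measurable_continuous_on_indicator) (auto intro!: continuous_intros W)
  moreover have "(\<lambda>z. indicator unit_disc z * W z / pi) = (\<lambda>z. indicator unit_disc z *\<^sub>R (W z / pi))"
    by auto
  ultimately have "(\<lambda>z. indicator unit_disc z * W z / pi) \<in> borel_measurable borel" by (simp only:)
  from measurable_compose[OF this measurable_ennreal] show ?thesis by (simp add: o_def)
qed

lemma area_avg:
  assumes G: "G \<in> borel_measurable borel"
  shows "(\<integral>\<^sup>+ z. G z \<partial>lborel) = (\<integral>\<^sup>+ z. circ_int (\<lambda>\<theta>. G (cis \<theta> * z)) \<partial>lborel)"
proof -
  have "(\<integral>\<^sup>+ z. G z \<partial>lborel) = circ_int (\<lambda>\<theta>. \<integral>\<^sup>+ z. G z \<partial>lborel)"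
    by (rule circ_int_const[symmetric])
  also have "\<dots> = circ_int (\<lambda>\<theta>. \<integral>\<^sup>+ z. G (cis \<theta> * z) \<partial>lborel)"
    unfolding circ_int_def
  proof (rule nn_integral_cong)
    fix \<theta> :: real
    show "ennreal (indicator {0..2*pi} \<theta> / (2*pi)) * (\<integral>\<^sup>+ z. G z \<partial>lborel) =
          ennreal (indicator {0..2*pi} \<theta> / (2*pi)) * (\<integral>\<^sup>+ z. G (cis \<theta> * z) \<partial>lborel)"
      by (cases "\<theta> \<in> {0..2*pi}") (auto simp: rot_inv[OF G])
  qed
  also have "\<dots> = (\<integral>\<^sup>+ \<theta>. \<integral>\<^sup>+ z. ennreal (indicator {0..2*pi} \<theta> / (2*pi)) * G (cis \<theta> * z) \<partial>lborel \<partial>lborel)"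
    unfolding circ_int_def
  proof (rule nn_integral_cong)
    fix \<theta> :: real
    have "(\<lambda>z. G (cis \<theta> * z)) \<in> borel_measurable borel"
      by (rule meas_comp[OF G]) (intro continuous_intros)
    then show "ennreal (indicator {0..2*pi} \<theta> / (2*pi)) * (\<integral>\<^sup>+ z. G (cis \<theta> * z) \<partial>lborel) =
          (\<integral>\<^sup>+ z. ennreal (indicator {0..2*pi} \<theta> / (2*pi)) * G (cis \<theta> * z) \<partial>lborel)"
      by (subst nn_integral_cmult) auto
  qed
  also have "\<dots> = (\<integral>\<^sup>+ z. \<integral>\<^sup>+ \<theta>. ennreal (indicator {0..2*pi} \<theta> / (2*pi)) * G (cis \<theta> * z) \<partial>lborel \<partial>lborel)"
  proof (rule lborel_pair.Fubini'[symmetric])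
    have m1: "(\<lambda>p::real\<times>complex. G (cis (fst p) * snd p)) \<in> borel_measurable borel"
      by (rule meas_comp[OF G]) (intro continuous_intros)
    have m0': "(\<lambda>\<theta>::real. indicator {0..2*pi} \<theta> / (2*pi)) \<in> borel_measurable borel"
      by (intro borel_measurable_divide borel_measurable_indicator) auto
    have m0: "(\<lambda>\<theta>::real. ennreal (indicator {0..2*pi} \<theta> / (2*pi))) \<in> borel_measurable borel"
      using measurable_compose[OF m0' measurable_ennreal] by (simp add: o_def)
    have m2: "(\<lambda>p::real\<times>complex. ennreal (indicator {0..2*pi} (fst p) / (2*pi))) \<in> borel_measurable borel"
      by (rule meas_comp[OF m0]) (intro continuous_intros)
    have "(\<lambda>p::real\<times>complex. ennreal (indicator {0..2*pi} (fst p) / (2*pi)) * G (cis (fst p) * snd p)) \<in> borel_measurable borel"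
      using borel_measurable_times_ennreal[OF m2 m1] .
    then show "(\<lambda>(\<theta>, z). ennreal (indicator {0..2*pi} \<theta> / (2*pi)) * G (cis \<theta> * z)) \<in> borel_measurable (lborel \<Otimes>\<^sub>M lborel)"
      by (simp add: lborel_prod measurable_lborel1 case_prod_beta)
  qed
  also have "\<dots> = (\<integral>\<^sup>+ z. circ_int (\<lambda>\<theta>. G (cis \<theta> * z)) \<partial>lborel)"
    by (simp add: circ_int_def)
  finally show ?thesis .
qed

lemma pointwise_circ:
  assumes g: "g holomorphic_on unit_disc" and p0: "p0 > 0" and z: "z \<in> unit_disc"
  shows "ennreal ((p0 * (1 - norm z)) / pi * (\<Sum>k<N. (norm ((deriv ^^ k) (deriv g) 0 / fact k))\<^sup>2 * norm z ^ (2*k)))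
    \<le> circ_int (\<lambda>\<theta>. ennreal (indicator unit_disc (cis \<theta> * z) * ((norm (deriv g (cis \<theta> * z)))\<^sup>2 * (p0 * (1 - norm (cis \<theta> * z)))) / pi))"
proof -
  define g' where "g' = deriv g"
  have hg': "g' holomorphic_on unit_disc" unfolding g'_def by (rule holomorphic_deriv[OF g open_ball])
  define c where "c = (p0 * (1 - norm z)) / pi"
  have c0: "c \<ge> 0" using z p0 by (simp add: c_def)
  define R where "R = 2 / (1 + norm z)"
  have zp: "1 + norm z > 0" by (smt (verit) norm_ge_zero)
  have R1: "R > 1" using z zp by (simp add: R_def less_divide_eq)
  define h where "h u = g' (z * u)" for u
  have map: "z * w \<in> unit_disc" if "w \<in> ball 0 R" for w
  proof -
    have "norm (z * w) = norm z * norm w" by (simp add: norm_mult)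
    also have "\<dots> \<le> norm z * R" using that by (intro mult_left_mono) auto
    also have "\<dots> < 1" using z zp by (simp add: R_def field_simps)
    finally show ?thesis by simp
  qed
  have hh: "h holomorphic_on ball 0 R"
    unfolding h_def by (rule holomorphic_on_compose_gen[OF _ hg', unfolded o_def]) (auto intro!: holomorphic_intros map)
  have coef: "(deriv ^^ k) h 0 = z ^ k * (deriv ^^ k) g' 0" for k
    unfolding h_def using higher_deriv_compose_linear[where S="ball 0 R" and z=0 and u=z and n=k, OF hg'] map R1 by simp
  have eqi: "circ_int (\<lambda>\<theta>. ennreal (indicator unit_disc (cis \<theta> * z) * ((norm (deriv g (cis \<theta> * z)))\<^sup>2 * (p0 * (1 - norm (cis \<theta> * z)))) / pi))
     = ennreal c * circ_int (\<lambda>\<theta>. ennreal ((norm (h (cis \<theta>)))\<^sup>2))"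
  proof -
    have mX: "(\<lambda>\<theta>. ennreal (indicator {0..2*pi} \<theta> / (2*pi)) * ennreal ((norm (h (cis \<theta>)))\<^sup>2)) \<in> borel_measurable borel"
    proof -
      have hc: "continuous_on (ball 0 R) h" using holomorphic_on_imp_continuous_on[OF hh] .
      have "continuous_on UNIV (\<lambda>\<theta>. (norm (h (cis \<theta>)))\<^sup>2)"
        by (intro continuous_intros continuous_on_compose2[OF hc]) (use R1 in auto)
      then have "(\<lambda>\<theta>. (norm (h (cis \<theta>)))\<^sup>2) \<in> borel_measurable borel"
        by (rule borel_measurable_continuous_onI)
      then show ?thesis by measurable
    qed
    have "circ_int (\<lambda>\<theta>. ennreal (indicator unit_disc (cis \<theta> * z) * ((norm (deriv g (cis \<theta> * z)))\<^sup>2 * (p0 * (1 - norm (cis \<theta> * z)))) / pi))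
       = (\<integral>\<^sup>+ \<theta>. ennreal c * (ennreal (indicator {0..2*pi} \<theta> / (2*pi)) * ennreal ((norm (h (cis \<theta>)))\<^sup>2)) \<partial>lborel)"
      unfolding circ_int_def
    proof (rule nn_integral_cong)
      fix \<theta> :: real
      have n: "norm (cis \<theta> * z) = norm z" by (simp add: norm_mult)
      have n2: "norm (z * cis \<theta>) = norm z" by (simp add: norm_mult)
      have i2: "indicator unit_disc (z * cis \<theta>) = (1::real)" using z n2 by (simp add: indicator_def)
      have "ennreal (indicator unit_disc (cis \<theta> * z) * ((norm (deriv g (cis \<theta> * z)))\<^sup>2 * (p0 * (1 - norm (cis \<theta> * z)))) / pi)
          = ennreal c * ennreal ((norm (h (cis \<theta>)))\<^sup>2)"
        using z c0 by (simp add: n n2 i2 h_def g'_def c_def ennreal_mult''[symmetric] mult.commute mult.left_commute)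
      then show "ennreal (indicator {0..2*pi} \<theta> / (2*pi)) * ennreal (indicator unit_disc (cis \<theta> * z) * ((norm (deriv g (cis \<theta> * z)))\<^sup>2 * (p0 * (1 - norm (cis \<theta> * z)))) / pi)
          = ennreal c * (ennreal (indicator {0..2*pi} \<theta> / (2*pi)) * ennreal ((norm (h (cis \<theta>)))\<^sup>2))"
        by (simp add: ac_simps)
    qed
    also have "\<dots> = ennreal c * circ_int (\<lambda>\<theta>. ennreal ((norm (h (cis \<theta>)))\<^sup>2))"
      unfolding circ_int_def using nn_integral_cmult[OF mX[folded measurable_lborel2], of "ennreal c"] by simp
    finally show ?thesis .
  qed
  have "ennreal (\<Sum>k<N. (norm ((deriv ^^ k) h 0 / fact k))\<^sup>2) \<le> circ_int (\<lambda>\<theta>. ennreal ((norm (h (cis \<theta>)))\<^sup>2))"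
    by (rule circ_bessel[OF hh R1])
  moreover have "(\<Sum>k<N. (norm ((deriv ^^ k) h 0 / fact k))\<^sup>2) = (\<Sum>k<N. (norm ((deriv ^^ k) (deriv g) 0 / fact k))\<^sup>2 * norm z ^ (2*k))"
    by (intro sum.cong refl) (simp add: coef g'_def norm_mult norm_divide norm_power power_mult_distrib power_divide power_mult[symmetric] mult.commute)
  ultimately have "ennreal c * ennreal (\<Sum>k<N. (norm ((deriv ^^ k) (deriv g) 0 / fact k))\<^sup>2 * norm z ^ (2*k))
      \<le> ennreal c * circ_int (\<lambda>\<theta>. ennreal ((norm (h (cis \<theta>)))\<^sup>2))"
    by (intro mult_left_mono) auto
  then show ?thesis
    using c0 by (simp add: eqi c_def ennreal_mult[symmetric] sum_nonneg)
qed

lemma area_lower: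
  assumes g: "g holomorphic_on unit_disc" and p0: "p0 > 0"
  shows "ennreal (p0 / 128 * (\<Sum>k<N. (norm ((deriv ^^ Suc k) g 0 / fact (Suc k)))\<^sup>2))
         \<le> area_int (\<lambda>z. (norm (deriv g z))\<^sup>2 * (p0 * (1 - norm z)))"
proof -
  define b2 where "b2 k = (norm ((deriv ^^ k) (deriv g) 0 / fact k))\<^sup>2" for k
  define J where "J k = (\<integral>\<^sup>+ z. ennreal (indicator unit_disc z * ((1 - norm z) * norm z ^ (2*k)) / pi) \<partial>lborel)" for k
  define W where "W z = (norm (deriv g z))\<^sup>2 * (p0 * (1 - norm z))" for z
  have hg': "deriv g holomorphic_on unit_disc" by (rule holomorphic_deriv[OF g open_ball])
  have cW: "continuous_on unit_disc W"
    unfolding W_def by (intro continuous_intros holomorphic_on_imp_continuous_on[OF hg'])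
  have mG: "(\<lambda>z. ennreal (indicator unit_disc z * W z / pi)) \<in> borel_measurable borel"
    by (rule meas_G[OF cW])
  have b2eq: "b2 k / (real k + 1)^2 = (norm ((deriv ^^ Suc k) g 0 / fact (Suc k)))\<^sup>2" for k
  proof -
    have "(deriv ^^ Suc k) g = (deriv ^^ k) (deriv g)" by (simp only: funpow_Suc_right o_def)
    moreover have nf: "norm (fact n :: complex) = fact n" for n
      by (metis norm_of_nat of_nat_fact)
    ultimately show ?thesis
      unfolding b2_def norm_divide nf
      by (simp add: power_divide fact_Suc power_mult_distrib field_simps del: of_nat_Suc)
  qed
  have "ennreal (p0 / 128 * (\<Sum>k<N. (norm ((deriv ^^ Suc k) g 0 / fact (Suc k)))\<^sup>2))
      = (\<Sum>k<N. ennreal (p0 * b2 k) * ennreal (1 / (128 * (real k + 1)^2)))"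
  proof -
    have "p0 / 128 * (\<Sum>k<N. (norm ((deriv ^^ Suc k) g 0 / fact (Suc k)))\<^sup>2) = (\<Sum>k<N. (p0 * b2 k) * (1 / (128 * (real k + 1)^2)))"
      unfolding sum_distrib_left
    proof (intro sum.cong refl)
      fix k assume "k \<in> {..<N}"
      show "p0 / 128 * (norm ((deriv ^^ Suc k) g 0 / fact (Suc k)))\<^sup>2 = p0 * b2 k * (1 / (128 * (real k + 1)\<^sup>2))"
        unfolding b2eq[symmetric] by (simp add: field_simps)
    qed
    also have "ennreal \<dots> = (\<Sum>k<N. ennreal ((p0 * b2 k) * (1 / (128 * (real k + 1)^2))))"
      by (rule sum_ennreal[symmetric]) (use p0 in \<open>auto simp: b2_def\<close>)
    also have "\<dots> = (\<Sum>k<N. ennreal (p0 * b2 k) * ennreal (1 / (128 * (real k + 1)^2)))"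
      by (intro sum.cong refl ennreal_mult) (use p0 in \<open>auto simp: b2_def\<close>)
    finally show ?thesis .
  qed
  also have "\<dots> \<le> (\<Sum>k<N. ennreal (p0 * b2 k) * J k)"
    by (intro sum_mono mult_left_mono) (auto simp: J_def radial_lower)
  also have "\<dots> = (\<integral>\<^sup>+ z. (\<Sum>k<N. ennreal (p0 * b2 k) * ennreal (indicator unit_disc z * ((1 - norm z) * norm z ^ (2*k)) / pi)) \<partial>lborel)"
  proof -
    have m: "(\<lambda>z. ennreal (indicator unit_disc z * ((1 - norm z) * norm z ^ (2*k)) / pi)) \<in> borel_measurable borel" for k
      by (rule meas_G) (intro continuous_intros)
    have "(\<integral>\<^sup>+ z. (\<Sum>k<N. ennreal (p0 * b2 k) * ennreal (indicator unit_disc z * ((1 - norm z) * norm z ^ (2*k)) / pi)) \<partial>lborel)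
        = (\<Sum>k<N. \<integral>\<^sup>+ z. ennreal (p0 * b2 k) * ennreal (indicator unit_disc z * ((1 - norm z) * norm z ^ (2*k)) / pi) \<partial>lborel)"
      by (rule nn_integral_sum) (use m in simp)
    also have "\<dots> = (\<Sum>k<N. ennreal (p0 * b2 k) * J k)"
      unfolding J_def by (intro sum.cong refl nn_integral_cmult) (use m in simp)
    finally show ?thesis by simp
  qed
  also have "\<dots> = (\<integral>\<^sup>+ z. ennreal (indicator unit_disc z * (p0 * (1 - norm z)) / pi * (\<Sum>k<N. b2 k * norm z ^ (2*k))) \<partial>lborel)"
  proof (rule nn_integral_cong)
    fix z :: complex
    show "(\<Sum>k<N. ennreal (p0 * b2 k) * ennreal (indicator unit_disc z * ((1 - norm z) * norm z ^ (2*k)) / pi))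
        = ennreal (indicator unit_disc z * (p0 * (1 - norm z)) / pi * (\<Sum>k<N. b2 k * norm z ^ (2*k)))"
    proof (cases "z \<in> unit_disc")
      case True
      then have "(\<Sum>k<N. ennreal (p0 * b2 k) * ennreal (indicator unit_disc z * ((1 - norm z) * norm z ^ (2*k)) / pi))
          = (\<Sum>k<N. ennreal (p0 * b2 k * ((1 - norm z) * norm z ^ (2*k)) / pi))"
        using p0 by (intro sum.cong refl) (simp add: ennreal_mult[symmetric] b2_def)
      also have "\<dots> = ennreal (\<Sum>k<N. p0 * b2 k * ((1 - norm z) * norm z ^ (2*k)) / pi)"
        by (rule sum_ennreal) (use True p0 in \<open>auto simp: b2_def\<close>)
      also have "(\<Sum>k<N. p0 * b2 k * ((1 - norm z) * norm z ^ (2*k)) / pi)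
          = indicator unit_disc z * (p0 * (1 - norm z)) / pi * (\<Sum>k<N. b2 k * norm z ^ (2*k))"
        using True by (simp add: sum_distrib_left sum_divide_distrib ac_simps)
      finally show ?thesis .
    qed simp
  qed
  also have "\<dots> \<le> (\<integral>\<^sup>+ z. circ_int (\<lambda>\<theta>. ennreal (indicator unit_disc (cis \<theta> * z) * W (cis \<theta> * z) / pi)) \<partial>lborel)"
  proof (rule nn_integral_mono)
    fix z :: complex
    show "ennreal (indicator unit_disc z * (p0 * (1 - norm z)) / pi * (\<Sum>k<N. b2 k * norm z ^ (2*k)))
        \<le> circ_int (\<lambda>\<theta>. ennreal (indicator unit_disc (cis \<theta> * z) * W (cis \<theta> * z) / pi))"
    proof (cases "z \<in> unit_disc")
      case True
      then show ?thesis
        using pointwise_circ[OF g p0 True, of N] by (simp add: W_def b2_def)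
    qed simp
  qed
  also have "\<dots> = (\<integral>\<^sup>+ z. ennreal (indicator unit_disc z * W z / pi) \<partial>lborel)"
    by (rule area_avg[OF mG, symmetric])
  also have "\<dots> = area_int (\<lambda>z. (norm (deriv g z))\<^sup>2 * (p0 * (1 - norm z)))"
    by (simp add: area_int_def W_def)
  finally show ?thesis .
qed



lemma poisson_lower:
  assumes cm: "circle_measure \<mu>" and nz: "\<not> zero_measure \<mu>"
  obtains p0 where "p0 > 0" "\<And>z. z \<in> unit_disc \<Longrightarrow> poisson \<mu> z \<ge> p0 * (1 - norm z)"
proof -
  have sets: "sets \<mu> = sets (restrict_space borel unit_circle)" and fm: "finite_measure \<mu>"
    using cm by (auto simp: circle_measure_def)
  interpret finite_measure \<mu> by (rule fm)
  have sp: "space \<mu> = unit_circle"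
    using sets_eq_imp_space_eq[OF sets] by (simp add: space_restrict_space)
  have mpos: "measure \<mu> (space \<mu>) > 0"
    using nz by (simp add: zero_measure_def emeasure_eq_measure zero_less_measure_iff)
  define p0 where "p0 = measure \<mu> (space \<mu>) / 2"
  have "p0 > 0" using mpos by (simp add: p0_def)
  moreover have "poisson \<mu> z \<ge> p0 * (1 - norm z)" if z: "z \<in> unit_disc" for z
  proof -
    define k where "k \<zeta> = (1 - (cmod z)\<^sup>2) / (cmod (z - \<zeta>))\<^sup>2" for \<zeta>
    have nz1: "norm z < 1" using z by simp
    have kb: "(1 - norm z) / 2 \<le> k \<zeta> \<and> k \<zeta> \<le> (1 - (cmod z)\<^sup>2) / (1 - norm z)\<^sup>2" if \<zeta>: "\<zeta> \<in> space \<mu>" for \<zeta>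
    proof -
      have n\<zeta>: "norm \<zeta> = 1" using \<zeta> sp by simp
      have d1: "norm (z - \<zeta>) \<le> 1 + norm z" using norm_triangle_ineq4[of z \<zeta>] n\<zeta> by simp
      have d2: "norm (z - \<zeta>) \<ge> 1 - norm z" using norm_triangle_ineq2[of \<zeta> z] n\<zeta> by (simp add: norm_minus_commute)
      have a0: "1 - norm z > 0" using nz1 by simp
      have num: "1 - (cmod z)\<^sup>2 = (1 - norm z) * (1 + norm z)" by (simp add: algebra_simps power2_eq_square)
      have nn: "0 \<le> 1 - (cmod z)\<^sup>2" using nz1 by (simp add: num)
      have "(1 - norm z) / 2 \<le> (1 - norm z) / (1 + norm z)"
        using a0 by (intro divide_left_mono) (auto simp: nz1 less_imp_le, smt (verit) norm_ge_zero)
      also have "\<dots> = (1 - (cmod z)\<^sup>2) / (1 + norm z)\<^sup>2"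
      proof -
        have p1: "1 + norm z \<noteq> 0" by (smt (verit) norm_ge_zero)
        show ?thesis unfolding num using p1 by (simp add: power2_eq_square)
      qed
      also have "\<dots> \<le> k \<zeta>"
        unfolding k_def using a0 d1 d2
        by (intro divide_left_mono nn power_mono mult_pos_pos) (auto intro: order.trans[OF _ d2])
      finally have lo: "(1 - norm z) / 2 \<le> k \<zeta>" .
      have hi: "k \<zeta> \<le> (1 - (cmod z)\<^sup>2) / (1 - norm z)\<^sup>2"
        unfolding k_def using a0 d2
        by (intro divide_left_mono nn power_mono mult_pos_pos) auto
      show ?thesis using lo hi by simp
    qed
    have mk: "k \<in> borel_measurable \<mu>"
    proof -
      have "k \<in> borel_measurable borel" unfolding k_def by measurable
      then have "k \<in> borel_measurable (restrict_space borel unit_circle)"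
        by (rule measurable_restrict_space1)
      then show ?thesis by (simp add: measurable_cong_sets[OF sets refl])
    qed
    have ik: "integrable \<mu> k"
    proof (rule integrable_const_bound[where B="(1 - (cmod z)\<^sup>2) / (1 - norm z)\<^sup>2"])
      show "AE x in \<mu>. norm (k x) \<le> (1 - (cmod z)\<^sup>2) / (1 - norm z)\<^sup>2"
      proof (intro AE_I2)
        fix x assume x: "x \<in> space \<mu>"
        from kb[OF x] have "(1 - norm z) / 2 \<le> k x" by blast
        moreover have "0 \<le> (1 - norm z) / 2" using nz1 by simp
        ultimately have "0 \<le> k x" by (rule order.trans[rotated])
        then show "norm (k x) \<le> (1 - (cmod z)\<^sup>2) / (1 - norm z)\<^sup>2" using kb[OF x] by simp
      qed
    qed (rule mk)
    have "p0 * (1 - norm z) = (\<integral>\<zeta>. (1 - norm z) / 2 \<partial>\<mu>)"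
      by (simp add: p0_def)
    also have "\<dots> \<le> (\<integral>\<zeta>. k \<zeta> \<partial>\<mu>)"
      by (rule integral_mono[OF _ ik]) (use kb in auto)
    also have "\<dots> = poisson \<mu> z" by (simp add: poisson_def k_def)
    finally show ?thesis .
  qed
  ultimately show ?thesis using that by blast
qed

lemma circ_int_mono: "(\<And>\<theta>. F \<theta> \<le> G \<theta>) \<Longrightarrow> circ_int F \<le> circ_int G"
  unfolding circ_int_def by (intro nn_integral_mono mult_left_mono) auto

lemma area_int_mono: "(\<And>z. z \<in> unit_disc \<Longrightarrow> F z \<le> G z) \<Longrightarrow> area_int F \<le> area_int G"
  unfolding area_int_def
  by (intro nn_integral_mono ennreal_leI) (auto simp: indicator_def divide_right_mono)

lemma term1_pointwise:
  assumes hf: "holo_bidisc f" and p0: "p0 > 0" and P: "\<And>z. z \<in> unit_disc \<Longrightarrow> P z \<ge> p0 * (1 - norm z)"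
    and z2: "z2 \<in> unit_disc"
  shows "ennreal (p0 / 128 * (\<Sum>m<N. (norm (cf1 f (Suc m) z2))\<^sup>2))
     \<le> area_int (\<lambda>z1. (cmod (pd1 f (z1, z2)))\<^sup>2 * P z1)"
proof -
  define g where "g w = f (w, z2)" for w
  have g: "g holomorphic_on unit_disc" unfolding g_def by (rule holo_slice1[OF hf z2])
  have "ennreal (p0 / 128 * (\<Sum>m<N. (norm (cf1 f (Suc m) z2))\<^sup>2))
      = ennreal (p0 / 128 * (\<Sum>k<N. (norm ((deriv ^^ Suc k) g 0 / fact (Suc k)))\<^sup>2))"
    by (simp add: cf1_def g_def[abs_def])
  also have "\<dots> \<le> area_int (\<lambda>z. (norm (deriv g z))\<^sup>2 * (p0 * (1 - norm z)))"
    by (rule area_lower[OF g p0])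
  also have "\<dots> \<le> area_int (\<lambda>z1. (cmod (pd1 f (z1, z2)))\<^sup>2 * P z1)"
    by (rule area_int_mono) (auto simp: pd1_def g_def[abs_def] intro!: mult_left_mono P)
  finally show ?thesis .
qed

lemma term1_bound:
  assumes hf: "holo_bidisc f" and p0: "p0 > 0" and P: "\<And>z. z \<in> unit_disc \<Longrightarrow> P z \<ge> p0 * (1 - norm z)"
    and fin: "(SUP r\<in>{0<..<1::real}. circ_int (\<lambda>\<theta>. area_int (\<lambda>z1. (cmod (pd1 f (z1, r * cis \<theta>)))\<^sup>2 * P z1))) < \<infinity>"
  obtains B where "\<And>N. (\<Sum>m<N. \<Sum>n<N. (norm (cfa f (Suc m) n))\<^sup>2) \<le> B"
proof -
  define S where "S = (SUP r\<in>{0<..<1::real}. circ_int (\<lambda>\<theta>. area_int (\<lambda>z1. (cmod (pd1 f (z1, r * cis \<theta>)))\<^sup>2 * P z1)))"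
  obtain B0 where B0: "S = ennreal B0" "B0 \<ge> 0"
    using fin unfolding S_def[symmetric] by (cases S) auto
  have main: "p0 / 128 * (\<Sum>m<N. \<Sum>n<N. (norm (cfa f (Suc m) n))\<^sup>2 * r ^ (2*n)) \<le> B0"
    if r: "0 < r" "r < 1" for r N
  proof -
    define G where "G \<theta> = p0 / 128 * (\<Sum>m<N. (norm (cf1 f (Suc m) (of_real r * cis \<theta>)))\<^sup>2)" for \<theta>
    have inD: "of_real r * cis \<theta> \<in> unit_disc" for \<theta> using r by (simp add: norm_mult)
    have cc: "continuous_on unit_disc (cf1 f m)" for m
      by (rule holomorphic_on_imp_continuous_on[OF cf1_holo[OF hf]])
    have cG: "continuous_on UNIV G"
      unfolding G_def
      by (intro continuous_intros continuous_on_compose2[OF cc]) (use r in \<open>auto simp: norm_mult\<close>)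
    have G0: "G \<theta> \<ge> 0" for \<theta> using p0 by (simp add: G_def sum_nonneg)
    define h where "h m u = cf1 f (Suc m) (of_real r * u)" for m u
    have map: "of_real r * w \<in> unit_disc" if "w \<in> ball 0 (1/r)" for w
    proof -
      have "norm (of_real r * w) = r * norm w" using r by (simp add: norm_mult)
      also have "\<dots> < r * (1/r)" using that r by (intro mult_strict_left_mono) auto
      finally show ?thesis using r by simp
    qed
    have R1: "1/r > 1" using r by simp
    have hh: "h m holomorphic_on ball 0 (1/r)" for m
      unfolding h_def by (rule holomorphic_on_compose_gen[OF _ cf1_holo[OF hf], unfolded o_def]) (auto intro!: holomorphic_intros map)
    have coef: "(norm ((deriv ^^ n) (h m) 0 / fact n))\<^sup>2 = (norm (cfa f (Suc m) n))\<^sup>2 * r ^ (2*n)" for m n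
    proof -
      have "(deriv ^^ n) (h m) 0 = of_real r ^ n * (deriv ^^ n) (cf1 f (Suc m)) 0"
        unfolding h_def using higher_deriv_compose_linear[where S="ball 0 (1/r)" and z=0 and u="of_real r" and n=n, OF cf1_holo[OF hf]] map R1 r
        by simp
      then show ?thesis
        using r by (simp add: cfa_def norm_mult norm_divide norm_power power_mult_distrib power_divide power_mult[symmetric] mult.commute)
    qed
    have "ennreal (p0 / 128 * (\<Sum>m<N. \<Sum>n<N. (norm (cfa f (Suc m) n))\<^sup>2 * r ^ (2*n)))
        = ennreal (p0 / 128 * (\<Sum>m<N. \<Sum>n<N. (norm ((deriv ^^ n) (h m) 0 / fact n))\<^sup>2))"
      by (simp add: coef)
    also have "\<dots> \<le> ennreal (p0 / 128 * (\<Sum>m<N. integral {0..1} (\<lambda>t. (norm (h m (ee t)))\<^sup>2)))"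
      using p0 by (intro ennreal_leI mult_left_mono sum_mono bessel01[OF hh R1]) auto
    also have "\<dots> = ennreal (integral {0..1} (\<lambda>t. G (2 * pi * t)))"
    proof -
      have ci: "(\<lambda>t. (norm (h m (ee t)))\<^sup>2) integrable_on {0..1}" for m
      proof -
        have "continuous_on {0..1} (\<lambda>t. (norm (h m (ee t)))\<^sup>2)"
          by (intro continuous_intros continuous_on_compose2[OF holomorphic_on_imp_continuous_on[OF hh]])
             (use R1 in auto)
        then show ?thesis by (rule integrable_continuous_interval)
      qed
      have "integral {0..1} (\<lambda>t. G (2 * pi * t)) = p0 / 128 * integral {0..1} (\<lambda>t. \<Sum>m<N. (norm (h m (ee t)))\<^sup>2)"
        by (simp add: G_def h_def ee_cis)
      also have "\<dots> = p0 / 128 * (\<Sum>m<N. integral {0..1} (\<lambda>t. (norm (h m (ee t)))\<^sup>2))"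
        by (subst integral_sum) (use ci in auto)
      finally show ?thesis by (simp only:)
    qed
    also have "\<dots> = circ_int (\<lambda>\<theta>. ennreal (G \<theta>))"
      by (rule circ_int_conv[OF cG G0, symmetric])
    also have "\<dots> \<le> circ_int (\<lambda>\<theta>. area_int (\<lambda>z1. (cmod (pd1 f (z1, r * cis \<theta>)))\<^sup>2 * P z1))"
      unfolding G_def by (rule circ_int_mono, rule term1_pointwise[OF hf p0 P inD])
    also have "\<dots> \<le> S"
      unfolding S_def by (rule SUP_upper) (use r in auto)
    finally show ?thesis using B0 by simp
  qed
  show ?thesis
  proof (rule that)
    fix N :: nat
    define r :: real where "r = 1 - 1 / (4 * real N + 4)"
    have r: "0 < r" "r < 1" by (auto simp: r_def field_simps)
    have rp: "r ^ (2*n) \<ge> 1/2" if "n < N" for n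
    proof -
      have b: "1 + real (2*N) * (r - 1) \<le> (1 + (r - 1)) ^ (2*N)"
        by (rule Bernoulli_inequality) (use r in simp)
      have c: "1 + real (2*N) * (r - 1) \<ge> 1/2"
        by (simp add: r_def field_simps)
      have d: "r ^ (2*N) \<le> r ^ (2*n)"
        using r that by (intro power_decreasing) auto
      from b c d show ?thesis by simp
    qed
    have "(\<Sum>m<N. \<Sum>n<N. (norm (cfa f (Suc m) n))\<^sup>2) \<le> (\<Sum>m<N. \<Sum>n<N. 2 * ((norm (cfa f (Suc m) n))\<^sup>2 * r ^ (2*n)))"
    proof (intro sum_mono)
      fix m n assume "n \<in> {..<N}"
      then have "1 \<le> 2 * r ^ (2*n)" using rp by force
      then have "(norm (cfa f (Suc m) n))\<^sup>2 * 1 \<le> (norm (cfa f (Suc m) n))\<^sup>2 * (2 * r ^ (2*n))"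
        by (intro mult_left_mono) auto
      then show "(norm (cfa f (Suc m) n))\<^sup>2 \<le> 2 * ((norm (cfa f (Suc m) n))\<^sup>2 * r ^ (2*n))" by simp
    qed
    also have "\<dots> = 256 / p0 * (p0 / 128 * (\<Sum>m<N. \<Sum>n<N. (norm (cfa f (Suc m) n))\<^sup>2 * r ^ (2*n)))"
      using p0 by (simp add: sum_distrib_left mult.commute)
    also have "\<dots> \<le> 256 / p0 * B0"
      using p0 main[OF r, of N] by (intro mult_left_mono) auto
    finally show "(\<Sum>m<N. \<Sum>n<N. (norm (cfa f (Suc m) n))\<^sup>2) \<le> 256 / p0 * B0" .
  qed
qed



lemma sum_Un_le_nonneg:
  fixes F :: "'a \<Rightarrow> real"
  assumes "finite U" "finite V" "\<And>x. F x \<ge> 0"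
  shows "sum F (U \<union> V) \<le> sum F U + sum F V"
proof -
  have "sum F (U \<union> V) + sum F (U \<inter> V) = sum F U + sum F V"
    by (rule sum.union_inter[OF assms(1,2)])
  moreover have "sum F (U \<inter> V) \<ge> 0" by (rule sum_nonneg) (use assms in auto)
  ultimately show ?thesis by linarith
qed

lemma sq_summable:
  assumes B1: "\<And>N. (\<Sum>m<N. \<Sum>n<N. (norm (a (Suc m) n))\<^sup>2) \<le> B1"
    and B2: "\<And>N. (\<Sum>m<N. \<Sum>n<N. (norm (a m (Suc n)))\<^sup>2) \<le> B2"
  shows "(\<lambda>(m,n). (norm (a m n))\<^sup>2) summable_on UNIV"
proof -
  define F where "F = (\<lambda>(m,n). (norm (a m n))\<^sup>2)"
  have F0: "F x \<ge> 0" for x by (simp add: F_def case_prod_beta)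
  have sq: "sum F ({..<N} \<times> {..<N}) \<le> F (0,0) + B1 + B2" for N
  proof -
    define Sq where "Sq = {..<N} \<times> {..<(N::nat)}"
    define A where "A = (\<lambda>(m,n). (Suc m, n)) ` Sq"
    define Bs where "Bs = (\<lambda>(m,n). (m, Suc n)) ` Sq"
    have fin: "finite Sq" "finite A" "finite Bs" by (auto simp: Sq_def A_def Bs_def)
    have sub: "Sq \<subseteq> {(0,0)} \<union> A \<union> Bs"
    proof
      fix p assume p: "p \<in> Sq"
      obtain m n where pmn: "p = (m,n)" by (cases p)
      show "p \<in> {(0,0)} \<union> A \<union> Bs"
      proof (cases m)
        case 0
        show ?thesis
        proof (cases n)
          case 0 then show ?thesis using pmn \<open>m = 0\<close> by simp
        next
          case (Suc n')
          then have "(0, n') \<in> Sq" using p pmn \<open>m = 0\<close> by (auto simp: Sq_def)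
          then show ?thesis using pmn \<open>m = 0\<close> Suc unfolding Bs_def by force
        qed
      next
        case (Suc m')
        then have "(m', n) \<in> Sq" using p pmn by (auto simp: Sq_def)
        then show ?thesis using pmn Suc unfolding A_def by force
      qed
    qed
    have "sum F Sq \<le> sum F ({(0,0)} \<union> A \<union> Bs)"
      by (rule sum_mono2) (use fin sub F0 in auto)
    also have "\<dots> \<le> sum F ({(0,0)} \<union> A) + sum F Bs"
      by (rule sum_Un_le_nonneg) (use fin F0 in auto)
    also have "\<dots> \<le> sum F {(0,0)} + sum F A + sum F Bs"
      using sum_Un_le_nonneg[of "{(0,0)}" A F] fin F0 by auto
    also have "sum F A = (\<Sum>m<N. \<Sum>n<N. (norm (a (Suc m) n))\<^sup>2)"
    proof -
      have "inj_on (\<lambda>(m,n). (Suc m, n)) Sq" by (auto simp: inj_on_def)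
      then have "sum F A = sum (F \<circ> (\<lambda>(m,n). (Suc m, n))) Sq"
        unfolding A_def by (rule sum.reindex)
      also have "\<dots> = (\<Sum>m<N. \<Sum>n<N. (norm (a (Suc m) n))\<^sup>2)"
        unfolding Sq_def by (simp add: sum.cartesian_product F_def case_prod_beta o_def)
      finally show ?thesis .
    qed
    also have "sum F Bs = (\<Sum>m<N. \<Sum>n<N. (norm (a m (Suc n)))\<^sup>2)"
    proof -
      have "inj_on (\<lambda>(m,n). (m, Suc n)) Sq" by (auto simp: inj_on_def)
      then have "sum F Bs = sum (F \<circ> (\<lambda>(m,n). (m, Suc n))) Sq"
        unfolding Bs_def by (rule sum.reindex)
      also have "\<dots> = (\<Sum>m<N. \<Sum>n<N. (norm (a m (Suc n)))\<^sup>2)"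
        unfolding Sq_def by (simp add: sum.cartesian_product F_def case_prod_beta o_def)
      finally show ?thesis .
    qed
    finally show ?thesis using B1[of N] B2[of N] by (simp add: Sq_def)
  qed
  have "F summable_on UNIV"
  proof (rule nonneg_bounded_partial_sums_imp_summable_on[where C="F (0,0) + B1 + B2"])
    show "\<forall>\<^sub>F X in finite_subsets_at_top UNIV. sum F X \<le> F (0,0) + B1 + B2"
    proof (rule eventually_finite_subsets_at_top_weakI)
      fix X :: "(nat \<times> nat) set" assume X: "finite X"
      obtain N where N: "X \<subseteq> {..<N} \<times> {..<N}"
      proof -
        obtain N1 where "\<forall>x\<in>fst ` X. x < N1" using X finite_nat_bounded[of "fst ` X"] by auto
        moreover obtain N2 where "\<forall>x\<in>snd ` X. x < N2" using X finite_nat_bounded[of "snd ` X"] by auto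
        ultimately have "X \<subseteq> {..<max N1 N2} \<times> {..<max N1 N2}"
          by (force simp: subset_iff max_def)
        then show ?thesis by (rule that)
      qed
      have "sum F X \<le> sum F ({..<N} \<times> {..<N})"
        by (rule sum_mono2) (use N F0 in auto)
      also have "\<dots> \<le> F (0,0) + B1 + B2" by (rule sq)
      finally show "sum F X \<le> F (0,0) + B1 + B2" .
    qed
  qed (use F0 in auto)
  then show ?thesis by (simp add: F_def)
qed

theorem lemma1p3:
  fixes \<mu>1 \<mu>2 :: "complex measure"
  assumes "circle_measure \<mu>1" and "circle_measure \<mu>2"
  shows "dirichlet_space \<mu>1 \<mu>2 \<subseteq> H2_bidisc"
proof
  fix f assume f: "f \<in> dirichlet_space \<mu>1 \<mu>2"
  show "f \<in> H2_bidisc"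
  proof (cases "zero_measure \<mu>1 \<or> zero_measure \<mu>2")
    case True
    then show ?thesis using f by (simp add: dirichlet_space_def)
  next
    case False
    then have hf: "holo_bidisc f" and fin: "dirichlet_integral \<mu>1 \<mu>2 f < \<infinity>"
      using f by (auto simp: dirichlet_space_def)
    from False have nz1: "\<not> zero_measure \<mu>1" and nz2: "\<not> zero_measure \<mu>2" by auto
    obtain p1 where p1: "p1 > 0" "\<And>z. z \<in> unit_disc \<Longrightarrow> poisson \<mu>1 z \<ge> p1 * (1 - norm z)"
      using poisson_lower[OF assms(1) nz1] by blast
    obtain p2 where p2: "p2 > 0" "\<And>z. z \<in> unit_disc \<Longrightarrow> poisson \<mu>2 z \<ge> p2 * (1 - norm z)"
      using poisson_lower[OF assms(2) nz2] by blast
    define S1 where "S1 = (SUP r\<in>{0<..<1::real}. circ_int (\<lambda>\<theta>. area_int (\<lambda>z1.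
        (cmod (pd1 f (z1, r * cis \<theta>)))\<^sup>2 * poisson \<mu>1 z1)))"
    define S2 where "S2 = (SUP r\<in>{0<..<1::real}. circ_int (\<lambda>\<theta>. area_int (\<lambda>z2.
        (cmod (pd2 f (r * cis \<theta>, z2)))\<^sup>2 * poisson \<mu>2 z2)))"
    have "S1 + S2 < \<infinity>" using fin by (simp add: dirichlet_integral_def S1_def S2_def)
    then have S1f: "S1 < \<infinity>" and S2f: "S2 < \<infinity>"
      by (auto simp: ennreal_add_eq_top top.not_eq_extremum)
    obtain B1 where B1: "\<And>N. (\<Sum>m<N. \<Sum>n<N. (norm (cfa f (Suc m) n))\<^sup>2) \<le> B1"
      using term1_bound[OF hf p1(1) p1(2)] S1f unfolding S1_def by blast
    define f' where "f' = (\<lambda>(a,b). f (b,a))"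
    have hf': "holo_bidisc f'" unfolding f'_def by (rule holo_swap[OF hf])
    have "(SUP r\<in>{0<..<1::real}. circ_int (\<lambda>\<theta>. area_int (\<lambda>z1. (cmod (pd1 f' (z1, r * cis \<theta>)))\<^sup>2 * poisson \<mu>2 z1))) = S2"
      by (simp add: S2_def pd1_def pd2_def f'_def)
    then obtain B2' where B2': "\<And>N. (\<Sum>m<N. \<Sum>n<N. (norm (cfa f' (Suc m) n))\<^sup>2) \<le> B2'"
      using term1_bound[OF hf' p2(1) p2(2)] S2f by auto
    have B2: "(\<Sum>m<N. \<Sum>n<N. (norm (cfa f m (Suc n)))\<^sup>2) \<le> B2'" for N
    proof -
      have "(\<Sum>m<N. \<Sum>n<N. (norm (cfa f m (Suc n)))\<^sup>2) = (\<Sum>n<N. \<Sum>m<N. (norm (cfa f m (Suc n)))\<^sup>2)"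
        by (rule sum.swap)
      also have "\<dots> = (\<Sum>n<N. \<Sum>m<N. (norm (cfa f' (Suc n) m))\<^sup>2)"
        by (simp add: f'_def cfa_swap[OF hf])
      finally show ?thesis using B2'[of N] by simp
    qed
    have sq: "(\<lambda>(m,n). (norm (cfa f m n))\<^sup>2) summable_on UNIV"
      by (rule sq_summable[OF B1 B2])
    show ?thesis
      unfolding H2_bidisc_def
    proof (intro CollectI conjI exI[of _ "\<lambda>(m,n). cfa f m n"] hf ballI)
      show "(\<lambda>(m, n). (cmod (case (m, n) of (m, n) \<Rightarrow> cfa f m n))\<^sup>2) summable_on UNIV"
        using sq by simp
      fix z1 z2 :: complex assume "z1 \<in> unit_disc" "z2 \<in> unit_disc"
      then show "((\<lambda>(m, n). (case (m, n) of (m, n) \<Rightarrow> cfa f m n) * z1 ^ m * z2 ^ n) has_sum f (z1, z2)) UNIV"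
        using H2_rep[OF hf] by simp
    qed
  qed
qed


end
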